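(* Let $a$ be a $k$-automatic sequence, and let $b_1,\dots,b_s$ be the primitive and prolongable automatic sequences of the decomposition described in the context. For each $i$ let $\mu_i$ be the unique $T$-invariant Borel probability measure on $X_{b_i}$, viewed as a measure on $X_a$. Then every ergodic $T$-invariant Borel probability measure on $X_a$ equals $\mu_i$ for some $1\le i\le s$.
   Context: For a sequence $u$ on a finite alphabet $A$, $\mathcal L(u)$ is the set of nonempty finite factors $u(m)\cdots u(n)$ ($m\le n$), and $X_u=\{x\in A^{\mathbb Z}:\mathcal L(x)\subseteq\mathcal L(u)\}$ with the product topology and the shift $T((x(n))_n)=(x(n+1))_n$. A sequence is $k$-automatic if $a(n)=\tau(\delta(q_0,(n)_k))$ for a finite automaton ($\delta$ extended to words letter by letter, $(n)_k$ the base-$k$ expansion, most significant digit first); it is primitive and prolongable if produced by such an automaton (in some base) with $\delta(q_0,0)=q_0$ and some $\ell\ge1$ such that any two states are joined by a word of length $\ell$. Decomposition: there are sequences $b_1,\dots,b_s$, each produced by a primitive and prolongable $k^{\ell}$-DFAO for some $\ell\ge1$, such that the sets $M_i=\{m\in\mathbb N:a(mk^\lambda+r)=b_i(mk^\lambda+r)\ \forall\lambda\in\mathbb N,0\le r<k^\lambda\}$ are pairwise disjoint with positive logarithmic density and $M_0=\mathbb N\setminus\bigcup_iM_i$ has upper Banach density $0$. It is known that $X_{b_i}\subseteq X_a$ and that each $(X_{b_i},T)$ is minimal and uniquely ergodic. *)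

theory Defs
  imports "HOL-Analysis.Analysis" "HOL-Probability.Probability"
begin

fun base_digits :: "nat \<Rightarrow> nat \<Rightarrow> nat list" where
  "base_digits k n = (if k < 2 \<or> n = 0 then [] else base_digits k (n div k) @ [n mod k])"

definition delta_star :: "('q \<Rightarrow> nat \<Rightarrow> 'q) \<Rightarrow> 'q \<Rightarrow> nat list \<Rightarrow> 'q" where
  "delta_star \<delta> q w = foldl \<delta> q w"

definition is_DFAO :: "nat \<Rightarrow> 'q set \<Rightarrow> ('q \<Rightarrow> nat \<Rightarrow> 'q) \<Rightarrow> 'q \<Rightarrow> bool" where
  "is_DFAO k Q \<delta> q0 \<longleftrightarrow> k \<ge> 2 \<and> finite Q \<and> q0 \<in> Q \<and> (\<forall>q\<in>Q. \<forall>d<k. \<delta> q d \<in> Q)"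

definition generates :: "nat \<Rightarrow> ('q \<Rightarrow> nat \<Rightarrow> 'q) \<Rightarrow> 'q \<Rightarrow> ('q \<Rightarrow> 'a) \<Rightarrow> (nat \<Rightarrow> 'a) \<Rightarrow> bool" where
  "generates k \<delta> q0 \<tau> a \<longleftrightarrow> (\<forall>n. a n = \<tau> (delta_star \<delta> q0 (base_digits k n)))"

definition automatic :: "nat \<Rightarrow> (nat \<Rightarrow> 'a) \<Rightarrow> bool" where
  "automatic k a \<longleftrightarrow> (\<exists>(Q::nat set) \<delta> q0 (\<tau>::nat \<Rightarrow> 'a). is_DFAO k Q \<delta> q0 \<and> generates k \<delta> q0 \<tau> a)"

definition prim_prolong_DFAO :: "nat \<Rightarrow> 'q set \<Rightarrow> ('q \<Rightarrow> nat \<Rightarrow> 'q) \<Rightarrow> 'q \<Rightarrow> bool" where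
  "prim_prolong_DFAO k Q \<delta> q0 \<longleftrightarrow> is_DFAO k Q \<delta> q0 \<and> \<delta> q0 0 = q0 \<and>
     (\<exists>l\<ge>1. \<forall>p\<in>Q. \<forall>q\<in>Q. \<exists>w. length w = l \<and> set w \<subseteq> {..<k} \<and> delta_star \<delta> p w = q)"

definition prim_prolong_automatic :: "nat \<Rightarrow> (nat \<Rightarrow> 'a) \<Rightarrow> bool" where
  "prim_prolong_automatic K b \<longleftrightarrow>
     (\<exists>(Q::nat set) \<delta> q0 (\<tau>::nat \<Rightarrow> 'a). prim_prolong_DFAO K Q \<delta> q0 \<and> generates K \<delta> q0 \<tau> b)"

definition has_log_density :: "nat set \<Rightarrow> real \<Rightarrow> bool" where
  "has_log_density M d \<longleftrightarrow>
     ((\<lambda>N. (\<Sum>n\<in>M \<inter> {1..N}. 1 / real n) / ln (real N)) \<longlonglongrightarrow> d)"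

definition upper_banach_density :: "nat set \<Rightarrow> ereal" where
  "upper_banach_density M =
     limsup (\<lambda>N. ereal (SUP m. real (card (M \<inter> {m..<m+N})) / real N))"

definition lang :: "(nat \<Rightarrow> 'a) \<Rightarrow> 'a list set" where
  "lang u = {map u [m..<Suc n] | m n. m \<le> n}"

definition lang2 :: "(int \<Rightarrow> 'a) \<Rightarrow> 'a list set" where
  "lang2 x = {map x [m..n] | m n. m \<le> n}"

definition subshift :: "(nat \<Rightarrow> 'a) \<Rightarrow> (int \<Rightarrow> 'a) set" where
  "subshift u = {x. lang2 x \<subseteq> lang u}"

definition shift :: "(int \<Rightarrow> 'a) \<Rightarrow> (int \<Rightarrow> 'a)" where
  "shift x = (\<lambda>n. x (n + 1))"

definition invariant_prob :: "(int \<Rightarrow> 'a::discrete_topology) set \<Rightarrow> (int \<Rightarrow> 'a) measure \<Rightarrow> bool" where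
  "invariant_prob X \<mu> \<longleftrightarrow> prob_space \<mu> \<and> sets \<mu> = sets (restrict_space borel X) \<and>
     shift \<in> measurable \<mu> \<mu> \<and> distr \<mu> \<mu> shift = \<mu>"

definition ergodic_prob :: "(int \<Rightarrow> 'a::discrete_topology) set \<Rightarrow> (int \<Rightarrow> 'a) measure \<Rightarrow> bool" where
  "ergodic_prob X \<mu> \<longleftrightarrow> invariant_prob X \<mu> \<and>
     (\<forall>A\<in>sets \<mu>. shift -` A \<inter> space \<mu> = A \<longrightarrow> emeasure \<mu> A = 0 \<or> emeasure \<mu> A = 1)"

end

theory Submission
  imports Defs
begin

definition winN :: "(nat \<Rightarrow> 'a) \<Rightarrow> nat \<Rightarrow> nat \<Rightarrow> 'a list" where
  "winN u m L = map (\<lambda>t. u (m + t)) [0..<L]"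

definition win :: "(int \<Rightarrow> 'a) \<Rightarrow> int \<Rightarrow> nat \<Rightarrow> 'a list" where
  "win x i L = map (\<lambda>t. x (i + int t)) [0..<L]"

lemma length_winN[simp]: "length (winN u m L) = L" by (simp add: winN_def)
lemma length_win[simp]: "length (win x i L) = L" by (simp add: win_def)
lemma nth_winN[simp]: "t < L \<Longrightarrow> winN u m L ! t = u (m + t)" by (simp add: winN_def)
lemma nth_win[simp]: "t < L \<Longrightarrow> win x i L ! t = x (i + int t)" by (simp add: win_def)

lemma map_upt_winN: "m \<le> n \<Longrightarrow> map u [m..<Suc n] = winN u m (Suc n - m)"
  by (rule nth_equalityI) (auto simp: winN_def simp del: upt_Suc)

lemma upto_map: "[i..j] = map (\<lambda>t. i + int t) [0..<nat (j - i + 1)]"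
proof (induction "nat (j - i + 1)" arbitrary: i)
  case 0 then show ?case by simp
next
  case (Suc n)
  then have "i \<le> j" by simp
  then have "[i..j] = i # [i+1..j]" by (simp add: upto_rec1)
  also have "[i+1..j] = map (\<lambda>t. i + 1 + int t) [0..<n]"
  proof -
    have "n = nat (j - (i+1) + 1)" using Suc(2) by simp
    from Suc(1)[OF this] show ?thesis using \<open>n = nat (j - (i+1) + 1)\<close> by simp
  qed
  also have "i # map (\<lambda>t. i + 1 + int t) [0..<n] = map (\<lambda>t. i + int t) [0..<Suc n]"
    by (simp add: map_upt_Suc del: upt_Suc)
  finally show ?case using Suc(2) by simp
qed

lemma map_upto_win: "m \<le> n \<Longrightarrow> map x [m..n] = win x m (nat (n - m + 1))"
  by (simp add: upto_map win_def)

lemma lang_win: "lang u = {winN u m L | m L. 1 \<le> L}"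
proof safe
  fix w assume "w \<in> lang u"
  then obtain m n where "m \<le> n" "w = map u [m..<Suc n]" by (auto simp: lang_def)
  then show "\<exists>m L. w = winN u m L \<and> 1 \<le> L" using map_upt_winN[of m n u] by (metis Suc_diff_le le_add1 plus_1_eq_Suc)
next
  fix m L :: nat assume "1 \<le> L"
  then have "map u [m..<Suc (m + L - 1)] = winN u m L" using map_upt_winN[of m "m + L - 1" u] by simp
  then show "winN u m L \<in> lang u" unfolding lang_def
    by (intro CollectI exI[of _ m] exI[of _ "m + L - 1"]) (use \<open>1 \<le> L\<close> in auto)
qed

lemma lang2_win: "lang2 x = {win x i L | i L. 1 \<le> L}"
proof safe
  fix w assume "w \<in> lang2 x"
  then obtain m n where "m \<le> n" "w = map x [m..n]" by (auto simp: lang2_def)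
  then show "\<exists>i L. w = win x i L \<and> 1 \<le> L" by (intro exI[of _ m] exI[of _ "nat (n - m + 1)"]) (simp add: map_upto_win)
next
  fix i :: int and L :: nat assume "1 \<le> L"
  then show "win x i L \<in> lang2 x" unfolding lang2_def
    by (intro CollectI exI[of _ i] exI[of _ "i + int L - 1"]) (auto simp: map_upto_win)
qed

lemma win_shift[simp]: "win (shift x) i L = win x (i + 1) L"
  by (simp add: win_def shift_def algebra_simps)

lemma funpow_shift: "(shift ^^ n) x = (\<lambda>t. x (t + int n))"
  by (induction n arbitrary: x) (auto simp: shift_def algebra_simps)

lemma win_funpow_shift[simp]: "win ((shift ^^ n) x) i L = win x (i + int n) L"
  by (simp add: win_def funpow_shift algebra_simps)

lemma lang2_shift[simp]: "lang2 (shift x) = lang2 x"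
proof -
  have "{win x (i + 1) L | i L. 1 \<le> L} = {win x i L | i L. 1 \<le> L}"
  proof (intro equalityI subsetI)
    fix w assume "w \<in> {win x (i + 1) L | i L. 1 \<le> L}"
    then obtain i L where "w = win x (i + 1) L" "1 \<le> L" by blast
    then show "w \<in> {win x i L | i L. 1 \<le> L}" by blast
  next
    fix w assume "w \<in> {win x i L | i L. 1 \<le> L}"
    then obtain i L where "w = win x i L" "1 \<le> L" by blast
    then have "w = win x ((i - 1) + 1) L" by simp
    then show "w \<in> {win x (i + 1) L | i L. 1 \<le> L}" using \<open>1 \<le> L\<close> by blast
  qed
  then show ?thesis by (simp add: lang2_win)
qed

lemma subshift_shift[simp]: "shift x \<in> subshift u \<longleftrightarrow> x \<in> subshift u"
  by (simp add: subshift_def)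

lemma subshift_funpow_shift[simp]: "(shift ^^ n) x \<in> subshift u \<longleftrightarrow> x \<in> subshift u"
  by (induction n) auto

lemma win_sub: "d + L' \<le> L \<Longrightarrow> win x (i + int d) L' = take L' (drop d (win x i L))"
  by (rule nth_equalityI) (auto simp: algebra_simps)

lemma winN_sub: "d + L' \<le> L \<Longrightarrow> winN u (m + d) L' = take L' (drop d (winN u m L))"
  by (rule nth_equalityI) (auto simp: algebra_simps)

lemma lang_factor: "w \<in> lang u \<Longrightarrow> d + L' \<le> length w \<Longrightarrow> 1 \<le> L' \<Longrightarrow> take L' (drop d w) \<in> lang u"
proof -
  assume "w \<in> lang u" "d + L' \<le> length w" "1 \<le> L'"
  then obtain m L where "w = winN u m L" by (auto simp: lang_win)
  then have "take L' (drop d w) = winN u (m + d) L'" using winN_sub[of d L' L u m] \<open>d + L' \<le> length w\<close> by simp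
  then show ?thesis using \<open>1 \<le> L'\<close> by (auto simp: lang_win)
qed

lemma subshift_winN: "x \<in> subshift u \<Longrightarrow> 1 \<le> L \<Longrightarrow> \<exists>m. win x i L = winN u m L"
proof -
  assume "x \<in> subshift u" "1 \<le> L"
  moreover have "win x i L \<in> lang2 x" unfolding lang2_win using \<open>1 \<le> L\<close> by blast
  ultimately have "win x i L \<in> lang u" by (auto simp: subshift_def)
  then obtain m L' where "win x i L = winN u m L'" by (auto simp: lang_win)
  moreover then have "L' = L" by (metis length_win length_winN)
  ultimately show ?thesis by auto
qed

lemma subshift_range: "x \<in> subshift u \<Longrightarrow> x t \<in> range u"
proof -
  assume "x \<in> subshift u"
  from subshift_winN[OF this, of 1 t] obtain m where "win x t 1 = winN u m 1" by auto
  then have "win x t 1 ! 0 = winN u m 1 ! 0" by simp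
  then show ?thesis by simp
qed

lemma subshift_centered:
  "x \<in> subshift u \<longleftrightarrow> (\<forall>n. win x (- int n) (2 * n + 1) \<in> lang u)"
proof
  assume xs: "x \<in> subshift u" show "\<forall>n. win x (- int n) (2 * n + 1) \<in> lang u"
  proof (intro allI)
    fix n
    from xs have "lang2 x \<subseteq> lang u" by (simp add: subshift_def)
    moreover have "win x (- int n) (2 * n + 1) \<in> lang2 x" unfolding lang2_win
      by (intro CollectI exI[of _ "- int n"] exI[of _ "2*n+1"]) simp
    ultimately show "win x (- int n) (2 * n + 1) \<in> lang u" by blast
  qed
next
  assume H: "\<forall>n. win x (- int n) (2 * n + 1) \<in> lang u"
  show "x \<in> subshift u" unfolding subshift_def lang2_win
  proof safe
    fix i :: int and L :: nat assume L: "1 \<le> L"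
    define n where "n = nat \<bar>i\<bar> + L"
    define d where "d = nat (i + int n)"
    have "i = - int n + int d" "d + L \<le> 2 * n + 1" unfolding d_def n_def by auto
    then have "win x i L = take L (drop d (win x (- int n) (2 * n + 1)))"
      using win_sub by metis
    also have "\<dots> \<in> lang u" using H L \<open>d + L \<le> 2 * n + 1\<close> by (intro lang_factor) auto
    finally show "win x i L \<in> lang u" .
  qed
qed

fun digs :: "nat \<Rightarrow> nat \<Rightarrow> nat \<Rightarrow> nat list" where
  "digs K 0 r = []"
| "digs K (Suc n) r = digs K n (r div K) @ [r mod K]"

lemma length_digs[simp]: "length (digs K n r) = n"
  by (induction n arbitrary: r) auto

lemma set_digs: "0 < K \<Longrightarrow> set (digs K n r) \<subseteq> {..<K}"
  by (induction n arbitrary: r) auto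

lemma digs_zero: "digs K n 0 = replicate n 0"
  by (induction n) (auto simp: replicate_append_same[symmetric])

lemma digs_add: "0 < K \<Longrightarrow> digs K (m + n) x = digs K m (x div K ^ n) @ digs K n (x mod K ^ n)"
proof (induction n arbitrary: x)
  case 0 then show ?case by simp
next
  case (Suc n)
  have "digs K (m + Suc n) x = digs K (m + n) (x div K) @ [x mod K]" by simp
  also have "\<dots> = digs K m (x div K div K ^ n) @ digs K n (x div K mod K ^ n) @ [x mod K]"
    using Suc by simp
  also have "x div K div K ^ n = x div K ^ Suc n" by (simp add: div_mult2_eq)
  also have "x div K mod K ^ n = x mod K ^ Suc n div K"
    using Suc.prems by (simp add: mod_mult2_eq)
  also have "x mod K = x mod K ^ Suc n mod K"
    by (simp add: mod_mod_cancel)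
  finally show ?case by simp
qed

definition val :: "nat \<Rightarrow> nat list \<Rightarrow> nat" where
  "val K w = foldl (\<lambda>a d. a * K + d) 0 w"

lemma val_snoc[simp]: "val K (w @ [d]) = val K w * K + d"
  by (simp add: val_def)

lemma val_less: "set w \<subseteq> {..<K} \<Longrightarrow> val K w < K ^ length w"
proof (induction w rule: rev_induct)
  case Nil then show ?case by (simp add: val_def)
next
  case (snoc d w)
  then have "val K w + 1 \<le> K ^ length w" "d < K" by auto
  then have "val K w * K + d < (val K w + 1) * K" by (simp add: algebra_simps)
  also have "\<dots> \<le> K ^ length w * K" using mult_le_mono1[OF \<open>val K w + 1 \<le> K ^ length w\<close>, of K] by simp
  finally show ?case by (simp add: algebra_simps)
qed

lemma digs_val: "set w \<subseteq> {..<K} \<Longrightarrow> digs K (length w) (val K w) = w"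
proof (induction w rule: rev_induct)
  case Nil then show ?case by simp
next
  case (snoc d w)
  then have "d < K" by auto
  then show ?case using snoc by simp
qed

lemma delta_star_append: "delta_star \<delta> q (u @ v) = delta_star \<delta> (delta_star \<delta> q u) v"
  by (simp add: delta_star_def)

lemma delta_star_snoc: "delta_star \<delta> q (u @ [d]) = \<delta> (delta_star \<delta> q u) d"
  by (simp add: delta_star_def)

lemma delta_star_Nil[simp]: "delta_star \<delta> q [] = q"
  by (simp add: delta_star_def)

lemma delta_star_closed:
  "(\<forall>q\<in>Q. \<forall>d<K. \<delta> q d \<in> Q) \<Longrightarrow> q \<in> Q \<Longrightarrow> set w \<subseteq> {..<K} \<Longrightarrow> delta_star \<delta> q w \<in> Q"
  by (induction w arbitrary: q) (auto simp: delta_star_def)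

lemma delta_star_zeros: "\<delta> q0 0 = q0 \<Longrightarrow> delta_star \<delta> q0 (replicate n 0) = q0"
  by (induction n) (auto simp: delta_star_def)

lemma base_digits_pos: "2 \<le> K \<Longrightarrow> 0 < n \<Longrightarrow> base_digits K n = base_digits K (n div K) @ [n mod K]"
  by simp

lemma base_digits_zero[simp]: "base_digits K 0 = []"
  by simp

declare base_digits.simps[simp del]

lemma set_base_digits: "2 \<le> K \<Longrightarrow> set (base_digits K n) \<subseteq> {..<K}"
proof (induction K n rule: base_digits.induct)
  case (1 K n)
  then show ?case
    by (cases "n = 0") (auto simp: base_digits_pos)
qed

definition occI :: "(nat \<Rightarrow> 'a) \<Rightarrow> 'a list \<Rightarrow> nat \<Rightarrow> nat" where
  "occI f w L = card {t. t < L \<and> t + length w \<le> L \<and> winN f t (length w) = w}"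

definition occ :: "(nat \<Rightarrow> 'a) \<Rightarrow> 'a list \<Rightarrow> nat \<Rightarrow> nat" where
  "occ f w L = card {t. t < L \<and> winN f t (length w) = w}"

lemma occI_le: "occI f w L \<le> L"
proof -
  have "occI f w L \<le> card {..<L}" unfolding occI_def by (rule card_mono) auto
  then show ?thesis by simp
qed

lemma occ_le: "occ f w L \<le> L"
proof -
  have "occ f w L \<le> card {..<L}" unfolding occ_def by (rule card_mono) auto
  then show ?thesis by simp
qed

lemma occ_occI: "occ f w L \<le> occI f w L + length w"
proof -
  let ?W = "length w"
  have "{t. t < L \<and> winN f t ?W = w} \<subseteq> {t. t < L \<and> t + ?W \<le> L \<and> winN f t ?W = w} \<union> {L - ?W..<L}"
    by auto
  then have "occ f w L \<le> card ({t. t < L \<and> t + ?W \<le> L \<and> winN f t ?W = w} \<union> {L - ?W..<L})"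
    unfolding occ_def by (intro card_mono) auto
  also have "\<dots> \<le> occI f w L + card {L - ?W..<L}" unfolding occI_def by (rule card_Un_le)
  also have "card {L - ?W..<L} \<le> ?W" by simp
  finally show ?thesis by simp
qed

lemma occ_blocks:
  assumes "\<forall>j<R. \<forall>r<B. u (j * B + r) = v j r"
  shows "(\<Sum>j<R. occI (v j) w B) \<le> occI u w (R * B) \<and>
         occI u w (R * B) \<le> (\<Sum>j<R. occI (v j) w B) + R * length w"
  using assms
proof (induction R)
  case 0 then show ?case by (simp add: occI_def)
next
  case (Suc R)
  let ?W = "length w"
  define S where "S = {t. t < R * B \<and> t + ?W \<le> R * B \<and> winN u t ?W = w}"
  define S' where "S' = {t. t < Suc R * B \<and> t + ?W \<le> Suc R * B \<and> winN u t ?W = w}"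
  define T where "T = {t. R * B \<le> t \<and> t < Suc R * B \<and> t + ?W \<le> Suc R * B \<and> winN u t ?W = w}"
  define V where "V = {t. t < B \<and> t + ?W \<le> B \<and> winN (v R) t ?W = w}"
  have IH: "(\<Sum>j<R. occI (v j) w B) \<le> card S \<and> card S \<le> (\<Sum>j<R. occI (v j) w B) + R * ?W"
    using Suc unfolding S_def occI_def by auto
  have TV: "T = (\<lambda>t. t + R * B) ` V"
  proof (intro equalityI subsetI)
    fix t assume "t \<in> T"
    then have t: "R * B \<le> t" "t < Suc R * B" "t + ?W \<le> Suc R * B" "winN u t ?W = w" by (auto simp: T_def)
    have "winN (v R) (t - R * B) ?W = winN u t ?W"
    proof (rule nth_equalityI)
      fix i assume "i < length (winN (v R) (t - R * B) ?W)"
      then have "i < ?W" by simp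
      moreover have "Suc R * B = R * B + B" by simp
      ultimately have "t - R * B + i < B" using t by linarith
      then have "u (R * B + (t - R * B + i)) = v R (t - R * B + i)"
        using Suc.prems by auto
      moreover have "R * B + (t - R * B + i) = t + i" using t(1) by simp
      moreover have "winN (v R) (t - R * B) ?W ! i = v R (t - R * B + i)" "winN u t ?W ! i = u (t + i)"
        using \<open>i < ?W\<close> by simp_all
      ultimately show "winN (v R) (t - R * B) ?W ! i = winN u t ?W ! i"
        by metis
    qed simp
    then have "t - R * B \<in> V" using t by (auto simp: V_def)
    then show "t \<in> (\<lambda>t. t + R * B) ` V" using t by (intro image_eqI[of _ _ "t - R * B"]) auto
  next
    fix t assume "t \<in> (\<lambda>t. t + R * B) ` V"
    then obtain r where r: "t = r + R * B" "r < B" "r + ?W \<le> B" "winN (v R) r ?W = w" by (auto simp: V_def)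
    have "winN u t ?W = winN (v R) r ?W"
    proof (rule nth_equalityI)
      fix i assume "i < length (winN u t ?W)"
      then have "i < ?W" by simp
      then have "r + i < B" using r by linarith
      then have "u (R * B + (r + i)) = v R (r + i)"
        using Suc.prems by auto
      then show "winN u t ?W ! i = winN (v R) r ?W ! i"
        using \<open>i < ?W\<close> r(1) by (simp add: algebra_simps)
    qed simp
    then show "t \<in> T" using r by (auto simp: T_def)
  qed
  have cT: "card T = occI (v R) w B"
    unfolding TV occI_def V_def by (rule card_image) (auto simp: inj_on_def)
  have fS: "finite S" "finite T" unfolding S_def T_def by (auto intro: finite_subset[of _ "{..<R*B}"] finite_subset[of _ "{..<Suc R*B}"])
  have dST: "S \<inter> T = {}" by (auto simp: S_def T_def)
  have "S \<union> T \<subseteq> S'" by (auto simp: S_def T_def S'_def)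
  then have low: "card S + card T \<le> card S'"
    using card_Un_disjoint[OF fS dST] by (metis S'_def card_mono finite_Collect_conjI finite_lessThan lessThan_def)
  have "S' \<subseteq> S \<union> T \<union> {R * B - ?W..<R * B}"
    by (auto simp: S_def T_def S'_def)
  then have "card S' \<le> card (S \<union> T \<union> {R * B - ?W..<R * B})" by (intro card_mono) (auto simp: fS)
  also have "\<dots> \<le> card S + card T + ?W"
  proof -
    have "card (S \<union> T \<union> {R * B - ?W..<R * B}) \<le> card (S \<union> T) + card {R * B - ?W..<R * B}"
      by (rule card_Un_le)
    moreover have "card (S \<union> T) \<le> card S + card T" by (rule card_Un_le)
    moreover have "card {R * B - ?W..<R * B} \<le> ?W" by simp
    ultimately show ?thesis by linarith
  qed
  finally have up: "card S' \<le> card S + card T + ?W" .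
  show ?case using IH low up cT unfolding S'_def[symmetric] occI_def
    by (simp add: S'_def)
qed

context
  fixes K :: nat and Q :: "nat set" and \<delta> :: "nat \<Rightarrow> nat \<Rightarrow> nat" and q0 :: nat
    and \<tau> :: "nat \<Rightarrow> 'a" and b :: "nat \<Rightarrow> 'a" and l1 :: nat
  assumes K2: "2 \<le> K" and finQ: "finite Q" and q0Q: "q0 \<in> Q"
    and clos: "\<forall>q\<in>Q. \<forall>d<K. \<delta> q d \<in> Q"
    and prol: "\<delta> q0 0 = q0"
    and l1: "1 \<le> l1"
    and prim: "\<forall>p\<in>Q. \<forall>q\<in>Q. \<exists>w. length w = l1 \<and> set w \<subseteq> {..<K} \<and> delta_star \<delta> p w = q"
    and gen: "\<forall>n. b n = \<tau> (delta_star \<delta> q0 (base_digits K n))"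
begin

definition "S x = delta_star \<delta> q0 (base_digits K x)"
definition "blk q n r = \<tau> (delta_star \<delta> q (digs K n r))"

lemma K0: "0 < K" using K2 by simp

lemma S_in: "S x \<in> Q"
  unfolding S_def using delta_star_closed[OF clos q0Q set_base_digits[OF K2]] .

lemma blk_state_in: "q \<in> Q \<Longrightarrow> delta_star \<delta> q (digs K n r) \<in> Q"
  using delta_star_closed[OF clos _ set_digs[OF K0]] by blast

lemma S_block: "r < K ^ n \<Longrightarrow> S (m * K ^ n + r) = delta_star \<delta> (S m) (digs K n r)"
proof (induction n arbitrary: r)
  case 0 then show ?case by simp
next
  case (Suc n)
  let ?x = "m * K ^ Suc n + r"
  show ?case
  proof (cases "?x = 0")
    case True
    then have "m = 0" "r = 0" using K0 by auto
    then show ?thesis using delta_star_zeros[of \<delta> q0 "Suc n", OF prol] by (simp add: S_def digs_zero)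
  next
    case False
    have xe: "?x = r + (m * K ^ n) * K" by (simp add: algebra_simps)
    have xd: "?x div K = m * K ^ n + r div K"
      unfolding xe using K0 by (simp only: div_mult_self1)
    have xm: "?x mod K = r mod K"
      unfolding xe by (simp only: mod_mult_self1)
    have rk: "r div K < K ^ n" using Suc.prems K0
      by (simp add: div_less_iff_less_mult mult.commute)
    have "S ?x = \<delta> (S (?x div K)) (?x mod K)"
      using False K2 by (simp add: S_def base_digits_pos delta_star_snoc)
    also have "\<dots> = \<delta> (delta_star \<delta> (S m) (digs K n (r div K))) (r mod K)"
      using Suc.IH[OF rk] xd xm by simp
    also have "\<dots> = delta_star \<delta> (S m) (digs K (Suc n) r)"
      by (simp add: delta_star_snoc)
    finally show ?thesis .
  qed
qed

lemma b_block: "r < K ^ n \<Longrightarrow> b (m * K ^ n + r) = blk (S m) n r"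
  using S_block gen by (simp add: blk_def S_def[symmetric])

definition "g w n q = occI (blk q n) w (K ^ n)"

lemma g_rec:
  assumes "q \<in> Q"
  shows "(\<Sum>j<K^l1. g w n (delta_star \<delta> q (digs K l1 j))) \<le> g w (l1 + n) q \<and>
         g w (l1 + n) q \<le> (\<Sum>j<K^l1. g w n (delta_star \<delta> q (digs K l1 j))) + K^l1 * length w"
proof -
  have "\<forall>j<K^l1. \<forall>r<K^n. blk q (l1 + n) (j * K^n + r) = blk (delta_star \<delta> q (digs K l1 j)) n r"
  proof (intro allI impI)
    fix j r assume "j < K^l1" "r < K^n"
    have Kn: "K^n \<noteq> 0" using K0 by simp
    have d0: "j * K^n + r = r + j * K^n" by simp
    have d1: "(j * K^n + r) div K^n = j" unfolding d0 div_mult_self1[OF Kn]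
      using \<open>r < K^n\<close> by simp
    have d2: "(j * K^n + r) mod K^n = r" unfolding d0 mod_mult_self1
      using \<open>r < K^n\<close> by simp
    have "digs K (l1 + n) (j * K^n + r) = digs K l1 j @ digs K n r"
      using digs_add[OF K0, of l1 n "j * K^n + r"] unfolding d1 d2 .
    then show "blk q (l1 + n) (j * K^n + r) = blk (delta_star \<delta> q (digs K l1 j)) n r"
      by (simp add: blk_def delta_star_append)
  qed
  from occ_blocks[OF this, of w] show ?thesis
    unfolding g_def power_add .
qed

definition "hi w n = Max (g w n ` Q)"
definition "lo w n = Min (g w n ` Q)"

lemma Qne: "Q \<noteq> {}" using q0Q by auto

lemma hi_ge: "q \<in> Q \<Longrightarrow> g w n q \<le> hi w n"
  unfolding hi_def using finQ by auto

lemma lo_le: "q \<in> Q \<Longrightarrow> lo w n \<le> g w n q"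
  unfolding lo_def using finQ by auto

lemma hi_in: "\<exists>q\<in>Q. g w n q = hi w n"
proof -
  have "Max (g w n ` Q) \<in> g w n ` Q" using finQ Qne by (intro Max_in) auto
  then show ?thesis unfolding hi_def by (metis imageE)
qed

lemma lo_in: "\<exists>q\<in>Q. g w n q = lo w n"
proof -
  have "Min (g w n ` Q) \<in> g w n ` Q" using finQ Qne by (intro Min_in) auto
  then show ?thesis unfolding lo_def by (metis imageE)
qed

lemma hi_le: "hi w n \<le> K ^ n"
  using hi_in[of w n] by (metis g_def occI_le)

lemma reach: "p \<in> Q \<Longrightarrow> q \<in> Q \<Longrightarrow> \<exists>j<K^l1. delta_star \<delta> p (digs K l1 j) = q"
proof -
  assume "p \<in> Q" "q \<in> Q"
  then obtain v where v: "length v = l1" "set v \<subseteq> {..<K}" "delta_star \<delta> p v = q" using prim by blast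
  then show ?thesis using val_less[OF v(2)] digs_val[OF v(2)] by (intro exI[of _ "val K v"]) auto
qed

lemma sum_upper:
  assumes "q \<in> Q"
  shows "(\<Sum>j<K^l1. g w n (delta_star \<delta> q (digs K l1 j))) \<le> lo w n + (K^l1 - 1) * hi w n"
proof -
  obtain p where p: "p \<in> Q" "g w n p = lo w n" using lo_in by blast
  obtain j0 where j0: "j0 < K^l1" "delta_star \<delta> q (digs K l1 j0) = p" using reach[OF assms p(1)] by blast
  let ?f = "\<lambda>j. g w n (delta_star \<delta> q (digs K l1 j))"
  have "(\<Sum>j<K^l1. ?f j) = ?f j0 + (\<Sum>j\<in>{..<K^l1} - {j0}. ?f j)"
    using j0 by (simp add: sum.remove)
  also have "(\<Sum>j\<in>{..<K^l1} - {j0}. ?f j) \<le> (\<Sum>j\<in>{..<K^l1} - {j0}. hi w n)"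
    by (intro sum_mono hi_ge blk_state_in assms)
  also have "\<dots> = (K^l1 - 1) * hi w n" using j0 by simp
  finally show ?thesis using j0 p by simp
qed

lemma sum_lower:
  assumes "q \<in> Q"
  shows "hi w n + (K^l1 - 1) * lo w n \<le> (\<Sum>j<K^l1. g w n (delta_star \<delta> q (digs K l1 j)))"
proof -
  obtain p where p: "p \<in> Q" "g w n p = hi w n" using hi_in by blast
  obtain j0 where j0: "j0 < K^l1" "delta_star \<delta> q (digs K l1 j0) = p" using reach[OF assms p(1)] by blast
  let ?f = "\<lambda>j. g w n (delta_star \<delta> q (digs K l1 j))"
  have "(K^l1 - 1) * lo w n = (\<Sum>j\<in>{..<K^l1} - {j0}. lo w n)" using j0 by simp
  also have "\<dots> \<le> (\<Sum>j\<in>{..<K^l1} - {j0}. ?f j)"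
    by (intro sum_mono lo_le blk_state_in assms)
  finally have "hi w n + (K^l1 - 1) * lo w n \<le> ?f j0 + (\<Sum>j\<in>{..<K^l1} - {j0}. ?f j)"
    using j0 p by simp
  also have "\<dots> = (\<Sum>j<K^l1. ?f j)"
    using j0 by (simp add: sum.remove)
  finally show ?thesis .
qed

lemma osc_step:
  "real (hi w (l1 + n)) - real (lo w (l1 + n))
     \<le> (real (K^l1) - 2) * (real (hi w n) - real (lo w n)) + real (K^l1) * real (length w)"
proof -
  obtain qa where qa: "qa \<in> Q" "g w (l1 + n) qa = hi w (l1 + n)" using hi_in by blast
  obtain qb where qb: "qb \<in> Q" "g w (l1 + n) qb = lo w (l1 + n)" using lo_in by blast
  have D1: "1 \<le> K^l1" using K0 by simp
  have A: "hi w (l1 + n) \<le> lo w n + (K^l1 - 1) * hi w n + K^l1 * length w"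
    using g_rec[OF qa(1), of w n] sum_upper[OF qa(1), of w n] qa(2) by linarith
  have B: "hi w n + (K^l1 - 1) * lo w n \<le> lo w (l1 + n)"
    using g_rec[OF qb(1), of w n] sum_lower[OF qb(1), of w n] qb(2) by linarith
  have E: "real (K^l1 - 1) = real (K^l1) - 1" using D1 by (simp add: of_nat_diff)
  have A': "real (hi w (l1 + n)) \<le> real (lo w n) + (real (K^l1) - 1) * real (hi w n) + real (K^l1) * real (length w)"
  proof -
    have "real (hi w (l1 + n)) \<le> real (lo w n + (K^l1 - 1) * hi w n + K^l1 * length w)"
      using A by (simp only: of_nat_le_iff)
    then show ?thesis unfolding of_nat_add of_nat_mult E .
  qed
  have B': "real (hi w n) + (real (K^l1) - 1) * real (lo w n) \<le> real (lo w (l1 + n))"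
  proof -
    have "real (hi w n + (K^l1 - 1) * lo w n) \<le> real (lo w (l1 + n))"
      using B by (simp only: of_nat_le_iff)
    then show ?thesis unfolding of_nat_add of_nat_mult E .
  qed
  from A' B' show ?thesis by (simp add: algebra_simps)
qed

definition "osc w n = (real (hi w n) - real (lo w n)) / real (K ^ n)"
definition "\<rho> = (real (K^l1) - 2) / real (K^l1)"

lemma KD: "2 \<le> real (K^l1)"
proof -
  have "K ^ 1 \<le> K ^ l1" using l1 K0 by (intro power_increasing) auto
  then have "(2::nat) \<le> K ^ l1" using K2 by simp
  then have "real (2::nat) \<le> real (K ^ l1)" by (simp only: of_nat_le_iff)
  then show ?thesis by simp
qed

lemma Kn_pos: "0 < real (K ^ n)"
proof -
  have "0 < K ^ n" using K0 by simp
  then show ?thesis by (simp only: of_nat_0_less_iff)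
qed

lemma lo_le_hi: "lo w n \<le> hi w n"
  using lo_le[OF q0Q] hi_ge[OF q0Q] order_trans by blast

lemma osc_nonneg: "0 \<le> osc w n"
  unfolding osc_def using lo_le_hi[of w n] Kn_pos[of n] by (intro divide_nonneg_pos) auto

lemma osc_le1: "osc w n \<le> 1"
proof -
  have "real (hi w n) - real (lo w n) \<le> real (K ^ n)" using hi_le[of w n] by linarith
  then show ?thesis unfolding osc_def using Kn_pos[of n] by (simp only: divide_le_eq_1_pos)
qed

lemma rho: "0 \<le> \<rho>" "\<rho> < 1" "\<rho> + 2 / real (K^l1) = 1"
proof -
  define D where "D = real (K^l1)"
  have D2: "2 \<le> D" using KD unfolding D_def .
  have r: "\<rho> = (D - 2) / D" unfolding \<rho>_def D_def ..
  show "0 \<le> \<rho>" unfolding r using D2 by simp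
  show "\<rho> < 1" unfolding r using D2 by (simp add: divide_less_eq_1_pos)
  show "\<rho> + 2 / real (K^l1) = 1" unfolding r D_def[symmetric] using D2 by (simp add: field_simps)
qed

lemma osc_step': "osc w (l1 + n) \<le> \<rho> * osc w n + real (length w) / real (K ^ n)"
proof -
  define D where "D = real (K^l1)"
  define B where "B = real (K^n)"
  have pos: "0 < D" "0 < B" using KD Kn_pos[of n] unfolding D_def B_def by linarith+
  have KB: "real (K ^ (l1 + n)) = D * B" unfolding D_def B_def by (simp add: power_add)
  have "osc w (l1 + n) = (real (hi w (l1 + n)) - real (lo w (l1 + n))) / (D * B)"
    unfolding osc_def KB ..
  also have "\<dots> \<le> ((D - 2) * (real (hi w n) - real (lo w n)) + D * real (length w)) / (D * B)"
    using osc_step[of w n] pos unfolding D_def[symmetric] by (intro divide_right_mono) auto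
  also have "\<dots> = \<rho> * osc w n + real (length w) / B"
    unfolding \<rho>_def osc_def D_def[symmetric] B_def[symmetric] using pos by (simp add: field_simps)
  finally show ?thesis unfolding B_def .
qed

lemma osc_iter:
  "osc w (n0 + i * l1) \<le> \<rho> ^ i + real (length w) * real (K^l1) / (2 * real (K ^ n0))"
proof (induction i)
  case 0
  have "0 \<le> real (length w) * real (K^l1) / (2 * real (K ^ n0))"
    using Kn_pos[of n0] by (intro divide_nonneg_nonneg mult_nonneg_nonneg) auto
  then show ?case using osc_le1[of w n0] by (simp only: power_0 mult_0 add_0_right)
next
  case (Suc i)
  define E where "E = real (length w) * real (K^l1) / (2 * real (K ^ n0))"
  have "osc w (n0 + Suc i * l1) = osc w (l1 + (n0 + i * l1))" by (simp add: algebra_simps)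
  also have "\<dots> \<le> \<rho> * osc w (n0 + i * l1) + real (length w) / real (K ^ (n0 + i * l1))"
    by (rule osc_step')
  also have "real (length w) / real (K ^ (n0 + i * l1)) \<le> real (length w) / real (K ^ n0)"
  proof -
    have "K ^ n0 \<le> K ^ (n0 + i * l1)" by (rule power_increasing) (use K2 in auto)
    then have "real (K ^ n0) \<le> real (K ^ (n0 + i * l1))" by (simp only: of_nat_le_iff)
    then show ?thesis by (rule divide_left_mono) (simp, intro mult_pos_pos Kn_pos)
  qed
  also have "real (length w) / real (K ^ n0) = (2 / real (K^l1)) * E"
  proof -
    define D where "D = real (K^l1)"
    define B where "B = real (K^n0)"
    have pos: "0 < D" "0 < B" using KD Kn_pos[of n0] unfolding D_def B_def by linarith+
    show ?thesis unfolding E_def D_def[symmetric] B_def[symmetric] using pos by (simp add: field_simps)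
  qed
  also have "\<rho> * osc w (n0 + i * l1) \<le> \<rho> * (\<rho> ^ i + E)"
    using Suc rho unfolding E_def by (intro mult_left_mono) auto
  also have "\<rho> * (\<rho> ^ i + E) + 2 / real (K^l1) * E = \<rho> ^ Suc i + (\<rho> + 2 / real (K^l1)) * E"
    by (simp add: algebra_simps)
  also have "\<dots> = \<rho> ^ Suc i + E" using rho(3) by simp
  finally show ?case unfolding E_def by simp
qed

lemma pow_big: "\<exists>n. x < real (K ^ n)"
proof -
  obtain n :: nat where "x < real n" using reals_Archimedean2 by blast
  moreover have "n < 2 ^ n" by (rule less_exp)
  moreover have "2 ^ n \<le> K ^ n" using K2 by (simp add: power_mono)
  ultimately show ?thesis by (metis of_nat_less_iff order.strict_trans order_less_le_trans)
qed

lemma osc_small: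
  assumes "0 < e"
  shows "\<exists>n. osc w n \<le> e \<and> real (length w) / real (K ^ n) \<le> e"
proof -
  define W where "W = real (length w)"
  define D where "D = real (K^l1)"
  have W0: "0 \<le> W" unfolding W_def by simp
  have D2: "2 \<le> D" using KD unfolding D_def .
  obtain n0 where n0: "2 * (W * D + W + 1) / e < real (K ^ n0)" using pow_big by blast
  define B where "B = real (K ^ n0)"
  have B0: "0 < B" unfolding B_def by (rule Kn_pos)
  have WD: "0 \<le> W * D" using W0 D2 by simp
  have "2 * (W * D + W + 1) < e * B" using n0 assms unfolding B_def[symmetric] by (simp add: divide_less_eq mult.commute)
  then have a1: "W * D \<le> e * B" using WD W0 by (smt (verit))
  have a2: "W \<le> e * B" using WD W0 \<open>2 * (W * D + W + 1) < e * B\<close> by (smt (verit))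
  have E1: "W * D / (2 * B) \<le> e / 2" using a1 B0 by (simp add: field_simps)
  have E2: "W / B \<le> e" using a2 B0 by (simp add: field_simps)
  obtain i where i: "\<rho> ^ i < e / 2" using real_arch_pow_inv[of "e/2" \<rho>] rho assms by auto
  define n where "n = n0 + i * l1"
  have "osc w n \<le> e" using osc_iter[of w n0 i] E1 i unfolding n_def W_def[symmetric] D_def[symmetric] B_def[symmetric]
    by linarith
  moreover have "W / real (K ^ n) \<le> W / B"
  proof -
    have "K ^ n0 \<le> K ^ n" unfolding n_def by (rule power_increasing) (use K2 in auto)
    then have "B \<le> real (K ^ n)" unfolding B_def by (simp only: of_nat_le_iff)
    then show ?thesis using B0 W0 K0 by (intro divide_left_mono) (auto intro!: mult_pos_pos Kn_pos)
  qed
  ultimately show ?thesis using E2 unfolding W_def by (intro exI[of _ n]) auto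
qed

lemma sum_S_bounds:
  "real R * real (lo w n) \<le> real (\<Sum>j<R. g w n (S (m0 + j))) \<and>
   real (\<Sum>j<R. g w n (S (m0 + j))) \<le> real R * real (hi w n)"
proof -
  have "(\<Sum>j<R. lo w n) \<le> (\<Sum>j<R. g w n (S (m0 + j)))" by (intro sum_mono lo_le S_in)
  moreover have "(\<Sum>j<R. g w n (S (m0 + j))) \<le> (\<Sum>j<R. hi w n)" by (intro sum_mono hi_ge S_in)
  ultimately have "R * lo w n \<le> (\<Sum>j<R. g w n (S (m0 + j)))" "(\<Sum>j<R. g w n (S (m0 + j))) \<le> R * hi w n"
    by simp_all
  then show ?thesis by (metis of_nat_le_iff of_nat_mult)
qed

lemma window_bounds:
  fixes p R n :: nat
  defines "B \<equiv> K ^ n"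
  assumes R: "1 \<le> R"
  shows "R * lo w n \<le> occ (\<lambda>t. b (p + t)) w ((R + 1) * B) \<and>
         occ (\<lambda>t. b (p + t)) w ((R + 1) * B) \<le> R * hi w n + (R + 1) * length w + B"
proof -
  let ?W = "length w" and ?N = "(R + 1) * B"
  define m0 where "m0 = p div B + 1"
  define s0 where "s0 = m0 * B - p"
  have B0: "0 < B" unfolding B_def using K0 by simp
  have mB: "m0 * B = p div B * B + B" unfolding m0_def by (simp add: algebra_simps)
  have pB: "p = p div B * B + p mod B" by simp
  have pmB: "p mod B < B" using B0 by simp
  have ps0: "p + s0 = m0 * B"
    unfolding s0_def using mB pB pmB by linarith
  have s0B: "s0 \<le> B"
    unfolding s0_def using mB pB pmB by linarith
  define u' where "u' = (\<lambda>t. b (m0 * B + t))"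
  have blocks: "\<forall>j<R. \<forall>r<B. u' (j * B + r) = blk (S (m0 + j)) n r"
  proof (intro allI impI)
    fix j r assume "j < R" "r < B"
    have "u' (j * B + r) = b ((m0 + j) * K ^ n + r)" unfolding u'_def B_def by (simp add: algebra_simps)
    also have "\<dots> = blk (S (m0 + j)) n r" using \<open>r < B\<close> unfolding B_def by (rule b_block)
    finally show "u' (j * B + r) = blk (S (m0 + j)) n r" .
  qed
  from occ_blocks[OF blocks, of w]
  have OB: "(\<Sum>j<R. g w n (S (m0 + j))) \<le> occI u' w (R * B)"
           "occI u' w (R * B) \<le> (\<Sum>j<R. g w n (S (m0 + j))) + R * ?W"
    unfolding g_def B_def by auto
  have SB: "R * lo w n \<le> (\<Sum>j<R. g w n (S (m0 + j)))" "(\<Sum>j<R. g w n (S (m0 + j))) \<le> R * hi w n"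
    using sum_S_bounds[of R w n m0] by (simp_all only: of_nat_mult[symmetric] of_nat_le_iff)
  define Occ where "Occ = {t. t < ?N \<and> winN (\<lambda>t. b (p + t)) t ?W = w}"
  have shiftwin: "winN (\<lambda>t. b (p + t)) (t + s0) ?W = winN u' t ?W" for t
  proof -
    have e: "p + (t + s0 + i) = m0 * B + (t + i)" for i using ps0 by simp
    show ?thesis by (simp only: winN_def u'_def e)
  qed
  have low: "occI u' w (R * B) \<le> card Occ"
  proof -
    have "(\<lambda>t. t + s0) ` {t. t < R * B \<and> t + ?W \<le> R * B \<and> winN u' t ?W = w} \<subseteq> Occ"
      using s0B shiftwin by (auto simp: Occ_def algebra_simps)
    moreover have "finite Occ" unfolding Occ_def by auto
    ultimately have "card ((\<lambda>t. t + s0) ` {t. t < R * B \<and> t + ?W \<le> R * B \<and> winN u' t ?W = w}) \<le> card Occ"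
      by (rule card_mono[rotated])
    then show ?thesis unfolding occI_def by (simp add: card_image inj_on_def)
  qed
  have up: "card Occ \<le> B + occI u' w (R * B) + ?W"
  proof -
    have "Occ \<subseteq> {..<s0} \<union> (\<lambda>t. t + s0) ` {t. t < R * B \<and> winN u' t ?W = w} \<union> {s0 + R * B..<?N}"
    proof
      fix t assume "t \<in> Occ"
      then have t: "t < ?N" "winN (\<lambda>t. b (p + t)) t ?W = w" by (auto simp: Occ_def)
      show "t \<in> {..<s0} \<union> (\<lambda>t. t + s0) ` {t. t < R * B \<and> winN u' t ?W = w} \<union> {s0 + R * B..<?N}"
      proof (cases "t < s0")
        case False
        show ?thesis
        proof (cases "t < s0 + R * B")
          case True
          then have "t - s0 \<in> {t. t < R * B \<and> winN u' t ?W = w}"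
            using False t shiftwin[of "t - s0"] by auto
          then show ?thesis using False by (auto intro!: image_eqI[of _ _ "t - s0"])
        qed (use t in auto)
      qed auto
    qed
    then have "card Occ \<le> card ({..<s0} \<union> (\<lambda>t. t + s0) ` {t. t < R * B \<and> winN u' t ?W = w} \<union> {s0 + R * B..<?N})"
      by (intro card_mono) auto
    also have "\<dots> \<le> card {..<s0} + card ((\<lambda>t. t + s0) ` {t. t < R * B \<and> winN u' t ?W = w}) + card {s0 + R * B..<?N}"
      by (meson add_le_mono card_Un_le le_refl order_trans)
    also have "card ((\<lambda>t. t + s0) ` {t. t < R * B \<and> winN u' t ?W = w}) = occ u' w (R * B)"
      unfolding occ_def by (simp add: card_image inj_on_def)
    also have "card {..<s0} + occ u' w (R * B) + card {s0 + R * B..<?N} = B + occ u' w (R * B)"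
      using s0B by (simp add: algebra_simps)
    finally show ?thesis using occ_occI[of u' w "R * B"] by linarith
  qed
  have "occ (\<lambda>t. b (p + t)) w ?N = card Occ" unfolding occ_def Occ_def by simp
  then show ?thesis using low up OB SB by (simp add: algebra_simps)
qed

lemma unif_freq:
  assumes e: "0 < e"
  shows "\<exists>N>0. \<exists>c. \<forall>p. \<bar>real (occ (\<lambda>t. b (p + t)) w N) / real N - c\<bar> \<le> e"
proof -
  obtain n where n: "osc w n \<le> e / 3" "real (length w) / real (K ^ n) \<le> e / 3"
    using osc_small[of "e / 3" w] e by auto
  obtain R :: nat where R: "3 / e < real R" using reals_Archimedean2 by blast
  have "0 < 3 / e" using e by simp
  then have "0 < real R" using R by linarith
  then have R1: "1 \<le> R" by simp
  define B where "B = K ^ n"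
  define N where "N = (R + 1) * B"
  have B0: "0 < B" unfolding B_def using K0 by simp
  have N0: "0 < N" unfolding N_def using B0 by simp
  define c where "c = real R * real (lo w n) / real N"
  show ?thesis
  proof (intro exI[of _ N] conjI exI[of _ c] allI)
    show "0 < N" by (rule N0)
    fix p
    define x where "x = real (occ (\<lambda>t. b (p + t)) w N)"
    define rB where "rB = real B"
    define rR where "rR = real R"
    define W where "W = real (length w)"
    define H where "H = real (hi w n)"
    define L where "L = real (lo w n)"
    have rB0: "0 < rB" unfolding rB_def using B0 by simp
    have rR1: "1 \<le> rR" unfolding rR_def using R1 by simp
    have W0: "0 \<le> W" unfolding W_def by simp
    have LH: "L \<le> H" unfolding L_def H_def using lo_le_hi by simp
    have rN: "real N = (rR + 1) * rB" unfolding N_def rR_def rB_def by (simp add: algebra_simps)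
    from window_bounds[OF R1, of w n p]
    have wb: "R * lo w n \<le> occ (\<lambda>t. b (p + t)) w N"
             "occ (\<lambda>t. b (p + t)) w N \<le> R * hi w n + (R + 1) * length w + B"
      unfolding N_def B_def by auto
    have xl: "rR * L \<le> x"
    proof -
      have "real (R * lo w n) \<le> real (occ (\<lambda>t. b (p + t)) w N)"
        using wb(1) by (simp only: of_nat_le_iff)
      then show ?thesis unfolding x_def rR_def L_def of_nat_mult .
    qed
    have xu: "x \<le> rR * H + (rR + 1) * W + rB"
    proof -
      have "real (occ (\<lambda>t. b (p + t)) w N) \<le> real (R * hi w n + (R + 1) * length w + B)"
        using wb(2) by (simp only: of_nat_le_iff)
      then show ?thesis unfolding x_def rR_def H_def W_def rB_def of_nat_add of_nat_mult of_nat_1 .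
    qed
    have o: "(H - L) / rB \<le> e / 3" using n(1) unfolding osc_def H_def L_def rB_def B_def .
    have w: "W / rB \<le> e / 3" using n(2) unfolding W_def rB_def B_def .
    have r: "1 / (rR + 1) \<le> e / 3"
    proof -
      have "3 / e < rR + 1" using R unfolding rR_def by simp
      then have "3 < e * (rR + 1)" using e by (simp add: divide_less_eq mult.commute)
      then show ?thesis using rR1 e by (simp add: field_simps)
    qed
    have c_eq: "c = rR * L / ((rR + 1) * rB)" unfolding c_def rN rR_def L_def ..
    have eqd: "x / real N - c = (x - rR * L) / ((rR + 1) * rB)"
      unfolding c_eq rN by (simp only: diff_divide_distrib)
    have lowb: "0 \<le> x / real N - c"
      unfolding eqd using xl rR1 rB0 by (intro divide_nonneg_pos mult_pos_pos) auto
    have "x / real N - c = (x - rR * L) / ((rR + 1) * rB)" by (rule eqd)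
    also have "\<dots> \<le> (rR * (H - L) + (rR + 1) * W + rB) / ((rR + 1) * rB)"
      using xu rR1 rB0 by (intro divide_right_mono) (auto simp: algebra_simps)
    also have "\<dots> = (rR / (rR + 1)) * ((H - L) / rB) + W / rB + 1 / (rR + 1)"
    proof -
      have nz: "rR + 1 \<noteq> 0" "rB \<noteq> 0" using rR1 rB0 by auto
      have t1: "rR * (H - L) / ((rR + 1) * rB) = (rR / (rR + 1)) * ((H - L) / rB)"
        by (simp only: times_divide_times_eq)
      have t2: "(rR + 1) * W / ((rR + 1) * rB) = W / rB" using nz by simp
      have t3: "rB / ((rR + 1) * rB) = 1 / (rR + 1)" using nz by simp
      show ?thesis unfolding add_divide_distrib t1 t2 t3 ..
    qed
    also have "(rR / (rR + 1)) * ((H - L) / rB) \<le> (H - L) / rB"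
    proof -
      have "0 \<le> (H - L) / rB" using LH rB0 by simp
      moreover have "0 \<le> rR / (rR + 1)" using rR1 by simp
      moreover have "rR / (rR + 1) \<le> 1" using rR1 by simp
      ultimately show ?thesis by (rule mult_left_le_one_le)
    qed
    finally have "x / real N - c \<le> e" using o w r by linarith
    then show "\<bar>real (occ (\<lambda>t. b (p + t)) w N) / real N - c\<bar> \<le> e"
      using lowb unfolding x_def[symmetric] by linarith
  qed
qed

end

lemma prim_prolong_unif:
  fixes b :: "nat \<Rightarrow> 'a"
  assumes "prim_prolong_automatic K b" "0 < e"
  shows "\<exists>N>0. \<exists>c. \<forall>p. \<bar>real (occ (\<lambda>t. b (p + t)) w N) / real N - c\<bar> \<le> e"
proof -
  obtain Q :: "nat set" and \<delta> q0 and \<tau> :: "nat \<Rightarrow> 'a" where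
    H: "prim_prolong_DFAO K Q \<delta> q0" "generates K \<delta> q0 \<tau> b"
    using assms(1) unfolding prim_prolong_automatic_def by blast
  then obtain l1 where l1: "1 \<le> l1"
    "\<forall>p\<in>Q. \<forall>q\<in>Q. \<exists>w. length w = l1 \<and> set w \<subseteq> {..<K} \<and> delta_star \<delta> p w = q"
    unfolding prim_prolong_DFAO_def by blast
  from H have D: "2 \<le> K" "finite Q" "q0 \<in> Q" "\<forall>q\<in>Q. \<forall>d<K. \<delta> q d \<in> Q" "\<delta> q0 0 = q0"
    unfolding prim_prolong_DFAO_def is_DFAO_def by auto
  from H(2) have G: "\<forall>n. b n = \<tau> (delta_star \<delta> q0 (base_digits K n))"
    unfolding generates_def .
  show ?thesis by (rule unif_freq[OF D l1 G assms(2)])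
qed

lemma open_coord: "open {x :: int \<Rightarrow> 'a::discrete_topology. x j = c}"
proof -
  have "{x :: int \<Rightarrow> 'a. x j = c} = (\<lambda>x. x j) -` {c}" by auto
  also have "open \<dots>" by (intro open_vimage discrete_topology_class.open_discrete continuous_on_product_coordinates)
  finally show ?thesis .
qed

lemma open_win: "open {x :: int \<Rightarrow> 'a::discrete_topology. P (win x i L)}"
proof -
  have "{x :: int \<Rightarrow> 'a. P (win x i L)} =
        (\<Union>w\<in>{w. P w \<and> length w = L}. \<Inter>t\<in>{..<L}. {x. x (i + int t) = w ! t})"
  proof (intro equalityI subsetI)
    fix x :: "int \<Rightarrow> 'a" assume "x \<in> {x. P (win x i L)}"
    then show "x \<in> (\<Union>w\<in>{w. P w \<and> length w = L}. \<Inter>t\<in>{..<L}. {x. x (i + int t) = w ! t})"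
      by (intro UN_I[of "win x i L"]) auto
  next
    fix x :: "int \<Rightarrow> 'a" assume "x \<in> (\<Union>w\<in>{w. P w \<and> length w = L}. \<Inter>t\<in>{..<L}. {x. x (i + int t) = w ! t})"
    then obtain w where w: "P w" "length w = L" "\<forall>t<L. x (i + int t) = w ! t" by auto
    have "win x i L = w" by (rule nth_equalityI) (use w in auto)
    then show "x \<in> {x. P (win x i L)}" using w by simp
  qed
  also have "open \<dots>"
    by (intro open_UN ballI open_INT finite_lessThan open_coord)
  finally show ?thesis .
qed

lemma borel_win: "{x :: int \<Rightarrow> 'a::discrete_topology. P (win x i L)} \<in> sets borel"
  by (rule borel_open[OF open_win])

lemma rs_win: "X \<inter> {x :: int \<Rightarrow> 'a::discrete_topology. P (win x i L)} \<in> sets (restrict_space borel X)"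
  unfolding sets_restrict_space using borel_win by blast

lemma space_rs[simp]: "space (restrict_space borel X) = (X :: (int \<Rightarrow> 'a::discrete_topology) set)"
  by (simp add: space_restrict_space)

lemma subshift_centered_set:
  "subshift u = (\<Inter>n. {x. win x (- int n) (2 * n + 1) \<in> lang u})"
  using subshift_centered by blast

lemma rs_subshift:
  "X \<inter> subshift u \<in> sets (restrict_space borel (X :: (int \<Rightarrow> 'a::discrete_topology) set))"
proof -
  have "X \<inter> subshift u = (\<Inter>n. X \<inter> {x. win x (- int n) (2 * n + 1) \<in> lang u})"
    unfolding subshift_centered_set by blast
  also have "\<dots> \<in> sets (restrict_space borel X)"
  proof (rule sets.countable_INT)
    show "range (\<lambda>n. X \<inter> {x. win x (- int n) (2 * n + 1) \<in> lang u}) \<subseteq> sets (restrict_space borel X)"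
    proof (rule image_subsetI)
      fix n show "X \<inter> {x. win x (- int n) (2 * n + 1) \<in> lang u} \<in> sets (restrict_space borel X)"
        by (rule rs_win)
    qed
  qed simp
  finally show ?thesis .
qed

lemma open_nbhd_win:
  fixes U :: "(int \<Rightarrow> 'a::discrete_topology) set"
  assumes "open U" "x \<in> U"
  shows "\<exists>n. \<forall>y. win y (- int n) (2 * n + 1) = win x (- int n) (2 * n + 1) \<longrightarrow> y \<in> U"
proof -
  have "openin (product_topology (\<lambda>i. euclidean) UNIV) U"
    using assms(1) by (simp add: euclidean_product_topology)
  from product_topology_open_contains_basis[OF this assms(2)]
  obtain X' where X': "x \<in> (\<Pi>\<^sub>E i\<in>UNIV. X' i)" "finite {i. X' i \<noteq> topspace euclidean}"
    "(\<Pi>\<^sub>E i\<in>UNIV. X' i) \<subseteq> U" by blast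
  define J where "J = {i. X' i \<noteq> UNIV}"
  have fJ: "finite J" using X'(2) unfolding J_def by simp
  define n where "n = Max (insert 0 ((\<lambda>i. nat \<bar>i\<bar>) ` J))"
  have nJ: "i \<in> J \<Longrightarrow> nat \<bar>i\<bar> \<le> n" for i unfolding n_def using fJ by (intro Max_ge) auto
  show ?thesis
  proof (intro exI[of _ n] allI impI)
    fix y assume H: "win y (- int n) (2 * n + 1) = win x (- int n) (2 * n + 1)"
    have "y i \<in> X' i" for i
    proof (cases "i \<in> J")
      case True
      then have ni: "nat \<bar>i\<bar> \<le> n" by (rule nJ)
      define t where "t = nat (i + int n)"
      have t: "t < 2 * n + 1" "- int n + int t = i" unfolding t_def using ni by auto
      have "y i = win y (- int n) (2 * n + 1) ! t" using t by simp
      also have "\<dots> = x i" unfolding H using t by simp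
      finally show ?thesis using X'(1) by auto
    next
      case False then show ?thesis unfolding J_def by auto
    qed
    then have "y \<in> (\<Pi>\<^sub>E i\<in>UNIV. X' i)" by auto
    then show "y \<in> U" using X'(3) by blast
  qed
qed

definition ccyl :: "(int \<Rightarrow> 'a) set \<Rightarrow> nat \<Rightarrow> 'a list \<Rightarrow> (int \<Rightarrow> 'a) set" where
  "ccyl X n w = X \<inter> {x. win x (- int n) (2 * n + 1) = w}"

definition gens :: "(int \<Rightarrow> 'a) set \<Rightarrow> (int \<Rightarrow> 'a) set set" where
  "gens X = range (\<lambda>(n, w). ccyl X n w) \<union> {X, {}}"

lemma ccyl_Int:
  assumes "n \<le> n'"
  shows "ccyl X n w \<inter> ccyl X n' w' = (if take (2 * n + 1) (drop (n' - n) w') = w then ccyl X n' w' else {})"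
proof -
  have key: "win x (- int n) (2 * n + 1) = take (2 * n + 1) (drop (n' - n) (win x (- int n') (2 * n' + 1)))" for x :: "int \<Rightarrow> 'a"
  proof -
    have "- int n = - int n' + int (n' - n)" using assms by simp
    moreover have "n' - n + (2 * n + 1) \<le> 2 * n' + 1" using assms by simp
    ultimately show ?thesis using win_sub by metis
  qed
  show ?thesis unfolding ccyl_def using key by auto
qed

lemma gens_Int_stable: "Int_stable (gens X)"
proof (unfold Int_stable_def, intro ballI)
  fix A B assume A: "A \<in> gens X" and B: "B \<in> gens X"
  have sub: "C \<in> gens X \<Longrightarrow> C \<subseteq> X" for C unfolding gens_def ccyl_def by auto
  have cc: "ccyl X n w \<inter> ccyl X n' w' \<in> gens X" for n w n' w'
  proof (cases "n \<le> n'")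
    case True then show ?thesis unfolding ccyl_Int[OF True] gens_def by auto
  next
    case False
    then have "n' \<le> n" by simp
    then show ?thesis using ccyl_Int[of n' n X w' w] unfolding gens_def by (auto simp: Int_commute)
  qed
  show "A \<inter> B \<in> gens X"
  proof (cases "A = X \<or> A = {} \<or> B = X \<or> B = {}")
    case True then show ?thesis using A B sub by (metis Int_absorb1 Int_absorb2 Int_empty_left Int_empty_right)
  next
    case False
    then obtain n w n' w' where "A = ccyl X n w" "B = ccyl X n' w'" using A B unfolding gens_def by auto
    then show ?thesis using cc by simp
  qed
qed

lemma gens_sub: "gens X \<subseteq> sets (restrict_space borel (X :: (int \<Rightarrow> 'a::discrete_topology) set))"
proof -
  have "ccyl X n w \<in> sets (restrict_space borel X)" for n w unfolding ccyl_def by (rule rs_win)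
  moreover have "X \<in> sets (restrict_space borel X)" using sets.top[of "restrict_space borel X"] by simp
  ultimately show ?thesis unfolding gens_def by auto
qed

lemma win_range: "x \<in> subshift a \<Longrightarrow> win x i L \<in> lists (range a)"
  using subshift_range by (auto simp: win_def)

lemma open_in_gens:
  fixes U :: "(int \<Rightarrow> 'a::discrete_topology) set"
  assumes "open U"
  shows "subshift a \<inter> U \<in> sigma_sets (subshift a) (gens (subshift a))"
proof -
  define X where "X = subshift a"
  define I where "I = {(n, w). w \<in> lists (range a) \<and> ccyl X n w \<subseteq> U}"
  have "countable I"
  proof (rule countable_subset)
    show "I \<subseteq> UNIV \<times> lists (range a)" unfolding I_def by auto
    show "countable (UNIV \<times> lists (range a) :: (nat \<times> 'a list) set)" by simp
  qed
  have eq: "X \<inter> U = \<Union> ((\<lambda>(n, w). ccyl X n w) ` I)"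
  proof (intro equalityI subsetI)
    fix x assume x: "x \<in> X \<inter> U"
    then obtain n where n: "\<forall>y. win y (- int n) (2 * n + 1) = win x (- int n) (2 * n + 1) \<longrightarrow> y \<in> U"
      using open_nbhd_win[OF assms] by blast
    have "(n, win x (- int n) (2 * n + 1)) \<in> I"
      unfolding I_def using n x win_range[of x a] by (auto simp: ccyl_def X_def)
    moreover have "x \<in> ccyl X n (win x (- int n) (2 * n + 1))" using x by (simp add: ccyl_def)
    ultimately show "x \<in> \<Union> ((\<lambda>(n, w). ccyl X n w) ` I)" by blast
  next
    fix x assume "x \<in> \<Union> ((\<lambda>(n, w). ccyl X n w) ` I)"
    then show "x \<in> X \<inter> U" unfolding I_def ccyl_def by auto
  qed
  have "\<Union> ((\<lambda>(n, w). ccyl X n w) ` I) \<in> sigma_sets X (gens X)"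
  proof (rule sigma_sets_UNION)
    show "countable ((\<lambda>(n, w). ccyl X n w) ` I)" using \<open>countable I\<close> by simp
    fix b assume "b \<in> (\<lambda>(n, w). ccyl X n w) ` I"
    then show "b \<in> sigma_sets X (gens X)" unfolding gens_def by (auto intro: sigma_sets.Basic)
  qed
  then show ?thesis using eq unfolding X_def by simp
qed

lemma gens_sigma:
  "sigma_sets (subshift a) (gens (subshift a)) = sets (restrict_space borel (subshift a :: (int \<Rightarrow> 'a::discrete_topology) set))"
proof
  let ?X = "subshift a :: (int \<Rightarrow> 'a) set"
  show "sigma_sets ?X (gens ?X) \<subseteq> sets (restrict_space borel ?X)"
    using sets.sigma_sets_subset[OF gens_sub[of ?X]] by simp
  show "sets (restrict_space borel ?X) \<subseteq> sigma_sets ?X (gens ?X)"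
  proof
    fix A assume "A \<in> sets (restrict_space borel ?X)"
    then obtain B where B: "B \<in> sets borel" "A = ?X \<inter> B" unfolding sets_restrict_space by auto
    have "B \<in> sigma_sets UNIV {S. open S}" using B(1) unfolding sets_borel .
    then have "?X \<inter> B \<in> sigma_sets ?X (gens ?X)"
    proof (induction rule: sigma_sets.induct)
      case (Basic U) then show ?case using open_in_gens by blast
    next
      case Empty then show ?case by (simp add: sigma_sets.Empty)
    next
      case (Compl U)
      have "?X \<inter> (UNIV - U) = ?X - (?X \<inter> U)" by blast
      then show ?case using sigma_sets.Compl[OF Compl.IH] by simp
    next
      case (Union F)
      have "?X \<inter> \<Union> (range F) = (\<Union>i. ?X \<inter> F i)" by blast
      then show ?case using sigma_sets.Union[of "\<lambda>i. ?X \<inter> F i", OF Union.IH] by simp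
    qed
    then show "A \<in> sigma_sets ?X (gens ?X)" using B(2) by simp
  qed
qed

lemma invariant_space:
  "invariant_prob X \<nu> \<Longrightarrow> space \<nu> = (X :: (int \<Rightarrow> 'a::discrete_topology) set)"
  unfolding invariant_prob_def using sets_eq_imp_space_eq[of \<nu> "restrict_space borel X"] by simp

lemma invariant_eqI:
  fixes \<nu> \<mu> :: "(int \<Rightarrow> 'a::discrete_topology) measure"
  assumes \<nu>: "invariant_prob (subshift a) \<nu>" and \<mu>: "invariant_prob (subshift a) \<mu>"
    and eq: "\<And>n w. emeasure \<nu> (ccyl (subshift a) n w) = emeasure \<mu> (ccyl (subshift a) n w)"
  shows "\<nu> = \<mu>"
proof (rule measure_eqI_generator_eq[where \<Omega> = "subshift a" and E = "gens (subshift a)" and A = "\<lambda>_. subshift a"])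
  interpret pn: prob_space \<nu> using \<nu> unfolding invariant_prob_def by simp
  interpret pm: prob_space \<mu> using \<mu> unfolding invariant_prob_def by simp
  have sn: "space \<nu> = subshift a" and sm: "space \<mu> = subshift a"
    using invariant_space[OF \<nu>] invariant_space[OF \<mu>] by auto
  show "Int_stable (gens (subshift a))" by (rule gens_Int_stable)
  show "gens (subshift a) \<subseteq> Pow (subshift a)" unfolding gens_def ccyl_def by auto
  show "sets \<nu> = sigma_sets (subshift a) (gens (subshift a))"
    using \<nu> unfolding invariant_prob_def gens_sigma by simp
  show "sets \<mu> = sigma_sets (subshift a) (gens (subshift a))"
    using \<mu> unfolding invariant_prob_def gens_sigma by simp
  show "range (\<lambda>_. subshift a) \<subseteq> gens (subshift a)" unfolding gens_def by auto
  show "(\<Union>i::nat. subshift a) = subshift a" by simp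
  show "emeasure \<nu> (subshift a) \<noteq> \<infinity>" by (simp add: pn.emeasure_space_1[unfolded sn])
  fix C assume "C \<in> gens (subshift a)"
  then consider "C = subshift a" | "C = {}" | n w where "C = ccyl (subshift a) n w" unfolding gens_def by auto
  then show "emeasure \<nu> C = emeasure \<mu> C"
  proof cases
    case 1 then show ?thesis using pn.emeasure_space_1 pm.emeasure_space_1 sn sm by simp
  next
    case 2 then show ?thesis by simp
  next
    case 3 then show ?thesis using eq by simp
  qed
qed

lemma invariant_funpow:
  fixes \<nu> :: "(int \<Rightarrow> 'a::discrete_topology) measure"
  assumes \<nu>: "invariant_prob X \<nu>" and A: "A \<in> sets \<nu>"
  shows "emeasure \<nu> ((shift ^^ n) -` A \<inter> space \<nu>) = emeasure \<nu> A"
  using A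
proof (induction n arbitrary: A)
  case 0 then show ?case using sets.sets_into_space by (simp add: Int_absorb2)
next
  case (Suc n)
  have sm: "shift \<in> measurable \<nu> \<nu>" and d: "distr \<nu> \<nu> shift = \<nu>" using \<nu> unfolding invariant_prob_def by auto
  have fm: "(shift ^^ n) \<in> measurable \<nu> \<nu>"
    by (induction n) (auto intro: measurable_compose[OF _ sm] simp: funpow_Suc_right)
  have Bm: "(shift ^^ n) -` A \<inter> space \<nu> \<in> sets \<nu>" using measurable_sets[OF fm Suc.prems] .
  have "(shift ^^ Suc n) -` A \<inter> space \<nu> = shift -` ((shift ^^ n) -` A \<inter> space \<nu>) \<inter> space \<nu>"
    using measurable_space[OF sm] by (auto simp del: funpow.simps simp: funpow_Suc_right)
  also have "emeasure \<nu> \<dots> = emeasure (distr \<nu> \<nu> shift) ((shift ^^ n) -` A \<inter> space \<nu>)"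
    using emeasure_distr[OF sm Bm] by simp
  also have "\<dots> = emeasure \<nu> ((shift ^^ n) -` A \<inter> space \<nu>)" using d by simp
  also have "\<dots> = emeasure \<nu> A" using Suc.IH[OF Suc.prems] .
  finally show ?case .
qed

lemma invariant_win_shift:
  fixes \<nu> :: "(int \<Rightarrow> 'a::discrete_topology) measure"
  assumes \<nu>: "invariant_prob (subshift a) \<nu>"
  shows "emeasure \<nu> (subshift a \<inter> {x. P (win x (i + int j) L)}) = emeasure \<nu> (subshift a \<inter> {x. P (win x i L)})"
proof -
  have sn: "space \<nu> = subshift a" using invariant_space[OF \<nu>] .
  have A: "subshift a \<inter> {x. P (win x i L)} \<in> sets \<nu>"
    using \<nu> rs_win unfolding invariant_prob_def by metis
  have "(shift ^^ j) -` (subshift a \<inter> {x. P (win x i L)}) \<inter> space \<nu> = subshift a \<inter> {x. P (win x (i + int j) L)}"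
    unfolding sn by auto
  then show ?thesis using invariant_funpow[OF \<nu> A, of j] by simp
qed

lemma sum_if_card: "(\<Sum>j<(N::nat). if P j then 1 else 0 :: real) = real (card {j. j < N \<and> P j})"
proof (induction N)
  case 0 then show ?case by simp
next
  case (Suc N)
  have "{j. j < Suc N \<and> P j} = {j. j < N \<and> P j} \<union> (if P N then {N} else {})" by (auto simp: less_Suc_eq)
  then have "card {j. j < Suc N \<and> P j} = card {j. j < N \<and> P j} + (if P N then 1 else 0)"
    by (auto simp: card_insert_if)
  then show ?case using Suc by simp
qed

lemma sum_indicator_win:
  "(\<Sum>j<N. indicator (X \<inter> {x. P (win x (int j) W)}) x :: real) = (if x \<in> X then real (card {j. j < N \<and> P (win x (int j) W)}) else 0)"
proof (cases "x \<in> X")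
  case True
  have "(\<Sum>j<N. indicator (X \<inter> {x. P (win x (int j) W)}) x :: real) = (\<Sum>j<N. if P (win x (int j) W) then 1 else 0)"
    by (intro sum.cong) (auto simp: indicator_def True)
  then show ?thesis using sum_if_card[of "\<lambda>j. P (win x (int j) W)" N] True by simp
next
  case False
  then show ?thesis by (simp add: indicator_def)
qed

lemma win_subshift_shift:
  assumes "x \<in> subshift u" "0 < N"
  shows "\<exists>p. \<forall>j<N. win x (int j) W = winN (\<lambda>t. u (p + t)) j W"
proof -
  obtain p where p: "win x 0 (N + W) = winN u p (N + W)" using subshift_winN[OF assms(1), of "N + W" 0] assms(2) by auto
  show ?thesis
  proof (intro exI[of _ p] allI impI)
    fix j assume "j < N"
    have "win x (0 + int j) W = take W (drop j (win x 0 (N + W)))" using \<open>j < N\<close> by (intro win_sub) simp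
    also have "\<dots> = take W (drop j (winN u p (N + W)))" using p by simp
    also have "\<dots> = winN u (p + j) W" using \<open>j < N\<close> by (intro winN_sub[symmetric]) simp
    also have "\<dots> = winN (\<lambda>t. u (p + t)) j W" by (simp add: winN_def add.assoc)
    finally show "win x (int j) W = winN (\<lambda>t. u (p + t)) j W" by simp
  qed
qed

lemma integral_window_sum:
  fixes \<nu> :: "(int \<Rightarrow> 'a::discrete_topology) measure"
  assumes \<nu>: "invariant_prob (subshift a) \<nu>"
  shows "integrable \<nu> (\<lambda>x. \<Sum>j<N. indicator (subshift a \<inter> {x. P (win x (int j) W)}) x :: real)"
    and "(\<integral>x. (\<Sum>j<N. indicator (subshift a \<inter> {x. P (win x (int j) W)}) x :: real) \<partial>\<nu>)
         = real N * measure \<nu> (subshift a \<inter> {x. P (win x 0 W)})"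
proof -
  interpret prob_space \<nu> using \<nu> unfolding invariant_prob_def by simp
  have sn: "space \<nu> = subshift a" using invariant_space[OF \<nu>] .
  have ms: "subshift a \<inter> {x. P (win x i W)} \<in> sets \<nu>" for i
    using \<nu> rs_win unfolding invariant_prob_def by metis
  show "integrable \<nu> (\<lambda>x. \<Sum>j<N. indicator (subshift a \<inter> {x. P (win x (int j) W)}) x :: real)"
  proof (rule Bochner_Integration.integrable_sum)
    fix j assume "j \<in> {..<N}"
    show "integrable \<nu> (indicator (subshift a \<inter> {x. P (win x (int j) W)}) :: _ \<Rightarrow> real)"
      using ms[of "int j"] by (intro integrable_real_indicator) (auto simp: emeasure_eq_measure)
  qed
  have eqm: "measure \<nu> (subshift a \<inter> {x. P (win x (int j) W)}) = measure \<nu> (subshift a \<inter> {x. P (win x 0 W)})" for j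
    using invariant_win_shift[OF \<nu>, of P 0 j W] by (simp add: measure_def)
  have "(\<integral>x. (\<Sum>j<N. indicator (subshift a \<inter> {x. P (win x (int j) W)}) x :: real) \<partial>\<nu>)
        = (\<Sum>j<N. measure \<nu> (subshift a \<inter> {x. P (win x (int j) W)}))"
  proof (subst Bochner_Integration.integral_sum)
    fix j assume "j \<in> {..<N}"
    show "integrable \<nu> (indicator (subshift a \<inter> {x. P (win x (int j) W)}) :: _ \<Rightarrow> real)"
      using ms[of "int j"] by (intro integrable_real_indicator) (auto simp: emeasure_eq_measure)
  next
    show "(\<Sum>j<N. \<integral>x. indicator (subshift a \<inter> {x. P (win x (int j) W)}) x \<partial>\<nu>) =
          (\<Sum>j<N. measure \<nu> (subshift a \<inter> {x. P (win x (int j) W)}))"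
      by (intro sum.cong refl) (simp add: sn Int_absorb2)
  qed
  also have "\<dots> = real N * measure \<nu> (subshift a \<inter> {x. P (win x 0 W)})" using eqm by simp
  finally show "(\<integral>x. (\<Sum>j<N. indicator (subshift a \<inter> {x. P (win x (int j) W)}) x :: real) \<partial>\<nu>)
         = real N * measure \<nu> (subshift a \<inter> {x. P (win x 0 W)})" .
qed

lemma freq_bound:
  fixes \<nu> :: "(int \<Rightarrow> 'a::discrete_topology) measure"
  assumes \<nu>: "invariant_prob (subshift a) \<nu>"
    and sub: "subshift b \<subseteq> subshift a" and full: "emeasure \<nu> (subshift b) = 1"
    and N: "0 < N" and unif: "\<forall>p. \<bar>real (occ (\<lambda>t. b (p + t)) w N) / real N - c\<bar> \<le> e"
  shows "\<bar>measure \<nu> (subshift a \<inter> {x. win x 0 (length w) = w}) - c\<bar> \<le> e"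
proof -
  interpret prob_space \<nu> using \<nu> unfolding invariant_prob_def by simp
  have sn: "space \<nu> = subshift a" using invariant_space[OF \<nu>] .
  let ?W = "length w"
  let ?f = "\<lambda>x. \<Sum>j<N. indicator (subshift a \<inter> {x. win x (int j) ?W = w}) x :: real"
  let ?m = "measure \<nu> (subshift a \<inter> {x. win x 0 ?W = w})"
  have bev: "subshift b \<in> events"
    using rs_subshift[of "subshift a" b] \<nu> sub unfolding invariant_prob_def by (simp add: Int_absorb1)
  have "AE x in \<nu>. x \<in> subshift b"
    using AE_in_set_eq_1[OF bev] full by (simp add: emeasure_eq_measure)
  then have AE: "AE x in \<nu>. real N * (c - e) \<le> ?f x \<and> ?f x \<le> real N * (c + e)"
  proof (rule AE_mp, intro AE_I2 impI)
    fix x assume "x \<in> subshift b"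
    then have xa: "x \<in> subshift a" using sub by auto
    obtain p where p: "\<forall>j<N. win x (int j) ?W = winN (\<lambda>t. b (p + t)) j ?W"
      using win_subshift_shift[OF \<open>x \<in> subshift b\<close> N] by blast
    have "{j. j < N \<and> win x (int j) ?W = w} = {t. t < N \<and> winN (\<lambda>t. b (p + t)) t ?W = w}"
      using p by auto
    then have fx: "?f x = real (occ (\<lambda>t. b (p + t)) w N)"
      using sum_indicator_win[of "subshift a" "\<lambda>v. v = w" ?W x N] xa by (simp add: occ_def)
    have "\<bar>?f x / real N - c\<bar> \<le> e" using unif fx by simp
    then have "c - e \<le> ?f x / real N" "?f x / real N \<le> c + e" by linarith+
    then show "real N * (c - e) \<le> ?f x \<and> ?f x \<le> real N * (c + e)"
      using N by (simp add: field_simps)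
  qed
  have I: "integrable \<nu> ?f" "(\<integral>x. ?f x \<partial>\<nu>) = real N * ?m"
    using integral_window_sum[OF \<nu>, of "\<lambda>v. v = w" ?W N] by auto
  have "(\<integral>x. real N * (c - e) \<partial>\<nu>) \<le> (\<integral>x. ?f x \<partial>\<nu>)"
    using AE I by (intro integral_mono_AE) auto
  moreover have "(\<integral>x. ?f x \<partial>\<nu>) \<le> (\<integral>x. real N * (c + e) \<partial>\<nu>)"
    using AE I by (intro integral_mono_AE) auto
  ultimately have "real N * (c - e) \<le> real N * ?m" "real N * ?m \<le> real N * (c + e)"
    using I by (simp_all add: prob_space)
  then have "c - e \<le> ?m" "?m \<le> c + e" using N by (simp_all add: mult_le_cancel_left_pos)
  then show ?thesis by linarith
qed

lemma density_block:
  assumes "upper_banach_density M0 = 0"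
  shows "\<exists>R0\<ge>2. \<forall>m. 8 * card (M0 \<inter> {m..<m+R0}) \<le> R0"
proof -
  define f where "f N = ereal (SUP m. real (card (M0 \<inter> {m..<m+N})) / real N)" for N
  have "limsup f = 0" using assms unfolding upper_banach_density_def f_def .
  then have "ereal (1/8) > limsup f" by simp
  then have "eventually (\<lambda>N. f N < ereal (1/8)) sequentially" by (rule Limsup_lessD)
  then obtain N0 where N0: "\<And>N. N \<ge> N0 \<Longrightarrow> f N < ereal (1/8)" unfolding eventually_sequentially by blast
  define R0 where "R0 = max N0 2"
  have R0: "2 \<le> R0" "R0 \<ge> N0" unfolding R0_def by auto
  have S: "(SUP m. real (card (M0 \<inter> {m..<m+R0})) / real R0) < 1/8"
    using N0[OF R0(2)] unfolding f_def by simp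
  show ?thesis
  proof (intro exI[of _ R0] conjI allI)
    show "2 \<le> R0" by (rule R0(1))
    fix m
    have le1: "real (card (M0 \<inter> {m..<m+R0})) / real R0 \<le> 1" for m
    proof -
      have "card (M0 \<inter> {m..<m+R0}) \<le> card {m..<m+R0}" by (intro card_mono) auto
      then have "real (card (M0 \<inter> {m..<m+R0})) \<le> real R0" by simp
      then show ?thesis using R0(1) by simp
    qed
    have "real (card (M0 \<inter> {m..<m+R0})) / real R0 \<le> (SUP m. real (card (M0 \<inter> {m..<m+R0})) / real R0)"
      by (rule cSUP_upper) (use le1 in \<open>auto intro!: bdd_aboveI\<close>)
    then have "real (card (M0 \<inter> {m..<m+R0})) / real R0 < 1/8" using S by linarith
    then have "8 * real (card (M0 \<inter> {m..<m+R0})) < real R0" using R0(1) by (simp add: field_simps)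
    then show "8 * card (M0 \<inter> {m..<m+R0}) \<le> R0" by linarith
  qed
qed

lemma comb_good:
  fixes a :: "nat \<Rightarrow> 'a" and b :: "nat \<Rightarrow> nat \<Rightarrow> 'a" and M :: "nat \<Rightarrow> nat set"
  assumes k2: "2 \<le> k"
    and Mdef: "\<forall>i\<in>{1..s}. M i = {m. \<forall>lam::nat. \<forall>r<k ^ lam. a (m * k ^ lam + r) = b i (m * k ^ lam + r)}"
    and dens: "upper_banach_density (UNIV - (\<Union>i\<in>{1..s}. M i)) = 0"
    and W: "1 \<le> W"
  shows "\<exists>N>0. \<forall>p. N \<le> 2 * card {j. j < N \<and> (\<exists>i\<in>{1..s}. winN a (p + j) W \<in> lang (b i))}"
proof -
  define M0 where "M0 = UNIV - (\<Union>i\<in>{1..s}. M i)"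
  obtain R0 where R0: "2 \<le> R0" "\<And>m. 8 * card (M0 \<inter> {m..<m+R0}) \<le> R0"
    using density_block[OF dens[folded M0_def]] by blast
  define lam where "lam = 8 * W"
  define B where "B = k ^ lam"
  have B8: "8 * W \<le> B"
  proof -
    have "lam < 2 ^ lam" by (rule less_exp)
    also have "2 ^ lam \<le> k ^ lam" using k2 by (simp add: power_mono)
    finally show ?thesis unfolding B_def lam_def by simp
  qed
  have B0: "0 < B" using B8 W by simp
  define N where "N = (R0 - 1) * B"
  have N0: "0 < N" unfolding N_def using R0(1) B0 by simp
  show ?thesis
  proof (intro exI[of _ N] conjI allI)
    show "0 < N" by (rule N0)
    fix p
    define m0 where "m0 = p div B"
    define G where "G = {j. j < N \<and> (\<exists>i\<in>{1..s}. winN a (p + j) W \<in> lang (b i))}"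
    define Bad1 where "Bad1 = {j. j < N \<and> (p + j) div B \<in> M0}"
    define Bad2 where "Bad2 = {j. j < N \<and> B < (p + j) mod B + W}"
    define \<phi> where "\<phi> j = ((p + j) div B, (p + j) mod B)" for j
    have inj: "inj_on \<phi> A" for A
    proof (rule inj_onI)
      fix x y assume "\<phi> x = \<phi> y"
      then have "(p + x) div B * B + (p + x) mod B = (p + y) div B * B + (p + y) mod B"
        unfolding \<phi>_def by simp
      then show "x = y" by simp
    qed
    have range: "m0 \<le> (p + j) div B \<and> (p + j) div B < m0 + R0" if "j < N" for j
    proof
      show "m0 \<le> (p + j) div B" unfolding m0_def by (intro div_le_mono) simp
      have "(p + j) div B \<le> (p + (R0 - 1) * B) div B" using that unfolding N_def by (intro div_le_mono) simp
      also have "\<dots> = (R0 - 1) + p div B" using B0 by simp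
      finally show "(p + j) div B < m0 + R0" unfolding m0_def using R0(1) by simp
    qed
    have cover: "{..<N} \<subseteq> G \<union> Bad1 \<union> Bad2"
    proof
      fix j assume "j \<in> {..<N}"
      then have j: "j < N" by simp
      show "j \<in> G \<union> Bad1 \<union> Bad2"
      proof (cases "(p + j) div B \<in> M0 \<or> B < (p + j) mod B + W")
        case True then show ?thesis using j unfolding Bad1_def Bad2_def by auto
      next
        case False
        define m where "m = (p + j) div B"
        define r where "r = (p + j) mod B"
        have pj: "p + j = m * B + r" unfolding m_def r_def by simp
        have rW: "r + W \<le> B" using False unfolding r_def by simp
        obtain i where i: "i \<in> {1..s}" "m \<in> M i" using False unfolding m_def M0_def by auto
        have agree: "\<forall>r'<k ^ lam. a (m * k ^ lam + r') = b i (m * k ^ lam + r')"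
          using Mdef i by auto
        have "winN a (p + j) W = winN (b i) (p + j) W"
        proof (rule nth_equalityI)
          fix t assume "t < length (winN a (p + j) W)"
          then have t: "t < W" by simp
          have "r + t < k ^ lam" using rW t unfolding B_def by simp
          then have "a (m * k ^ lam + (r + t)) = b i (m * k ^ lam + (r + t))" using agree by blast
          moreover have "p + j + t = m * k ^ lam + (r + t)" using pj unfolding B_def by simp
          ultimately show "winN a (p + j) W ! t = winN (b i) (p + j) W ! t" using t by (simp add: add.assoc)
        qed simp
        moreover have "winN (b i) (p + j) W \<in> lang (b i)" unfolding lang_win using W by blast
        ultimately show ?thesis using i j unfolding G_def by auto
      qed
    qed
    have c1: "card Bad1 \<le> card (M0 \<inter> {m0..<m0+R0}) * B"
    proof -
      have "card Bad1 \<le> card ((M0 \<inter> {m0..<m0+R0}) \<times> {..<B})"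
      proof (rule card_inj_on_le[OF inj])
        show "\<phi> ` Bad1 \<subseteq> (M0 \<inter> {m0..<m0+R0}) \<times> {..<B}"
          using range B0 unfolding Bad1_def \<phi>_def by auto
      qed auto
      then show ?thesis by (simp add: card_cartesian_product)
    qed
    have c2: "card Bad2 \<le> R0 * W"
    proof -
      have "card Bad2 \<le> card ({m0..<m0+R0} \<times> {B - W..<B})"
      proof (rule card_inj_on_le[OF inj])
        show "\<phi> ` Bad2 \<subseteq> {m0..<m0+R0} \<times> {B - W..<B}"
          using range B0 unfolding Bad2_def \<phi>_def by auto
      qed auto
      then show ?thesis using B8 by (simp add: card_cartesian_product)
    qed
    have "N \<le> card (G \<union> Bad1 \<union> Bad2)"
      using card_mono[OF _ cover] unfolding G_def Bad1_def Bad2_def by auto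
    also have "\<dots> \<le> card G + card Bad1 + card Bad2"
      by (meson add_le_mono card_Un_le le_refl order_trans)
    finally have tot: "N \<le> card G + card Bad1 + card Bad2" .
    define P where "P = R0 * B"
    have NP: "N + B = P" unfolding N_def P_def using R0(1) by (simp add: algebra_simps)
    have P2: "2 * B \<le> P" unfolding P_def using R0(1) by simp
    have e1: "8 * (card (M0 \<inter> {m0..<m0+R0}) * B) \<le> P"
      unfolding P_def using mult_le_mono1[OF R0(2)[of m0], of B] by (simp add: algebra_simps)
    have e2: "8 * (R0 * W) \<le> P"
      unfolding P_def using mult_le_mono2[OF B8, of R0] by (simp add: algebra_simps)
    from tot c1 c2 NP P2 e1 e2 show "N \<le> 2 * card G" by linarith
  qed
qed

lemma winN_shift_fun: "winN (\<lambda>t. u (p + t)) j W = winN u (p + j) W"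
  by (simp add: winN_def add.assoc)

lemma positive_component:
  fixes \<nu> :: "(int \<Rightarrow> 'a::discrete_topology) measure" and b :: "nat \<Rightarrow> nat \<Rightarrow> 'a"
  assumes \<nu>: "invariant_prob (subshift a) \<nu>"
    and sub: "\<forall>i\<in>{1..s}. subshift (b i) \<subseteq> subshift a"
    and comb: "\<And>W. 1 \<le> W \<Longrightarrow> \<exists>N>0. \<forall>p. N \<le> 2 * card {j. j < N \<and> (\<exists>i\<in>{1..s}. winN a (p + j) W \<in> lang (b i))}"
  shows "\<exists>i\<in>{1..s}. emeasure \<nu> (subshift (b i)) \<noteq> 0"
proof (rule ccontr)
  assume "\<not> ?thesis"
  then have zero: "\<And>i. i \<in> {1..s} \<Longrightarrow> emeasure \<nu> (subshift (b i)) = 0" by blast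
  interpret prob_space \<nu> using \<nu> unfolding invariant_prob_def by simp
  have sn: "space \<nu> = subshift a" using invariant_space[OF \<nu>] .
  have setsn: "sets \<nu> = sets (restrict_space borel (subshift a))" using \<nu> unfolding invariant_prob_def by simp
  define E where "E i L = subshift a \<inter> {x. win x (- int L) (2 * L + 1) \<in> lang (b i)}" for i L
  have Em: "E i L \<in> sets \<nu>" for i L unfolding E_def setsn by (rule rs_win)
  have dec: "decseq (E i)" for i
  proof (rule decseq_SucI)
    fix L
    show "E i (Suc L) \<subseteq> E i L"
    proof
      fix x assume "x \<in> E i (Suc L)"
      then have x: "x \<in> subshift a" "win x (- int (Suc L)) (2 * Suc L + 1) \<in> lang (b i)" unfolding E_def by auto
      have "win x (- int (Suc L) + int 1) (2 * L + 1) = take (2 * L + 1) (drop 1 (win x (- int (Suc L)) (2 * Suc L + 1)))"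
        by (rule win_sub) simp
      moreover have "- int (Suc L) + int 1 = - int L" by simp
      ultimately have "win x (- int L) (2 * L + 1) = take (2 * L + 1) (drop 1 (win x (- int (Suc L)) (2 * Suc L + 1)))"
        by simp
      also have "\<dots> \<in> lang (b i)" using x(2) by (intro lang_factor) auto
      finally show "x \<in> E i L" using x(1) unfolding E_def by simp
    qed
  qed
  have lim: "(\<lambda>L. measure \<nu> (E i L)) \<longlonglongrightarrow> 0" if i: "i \<in> {1..s}" for i
  proof -
    have "(\<lambda>L. measure \<nu> (E i L)) \<longlonglongrightarrow> measure \<nu> (\<Inter>L. E i L)"
      by (rule finite_Lim_measure_decseq) (use Em dec in auto)
    moreover have "(\<Inter>L. E i L) = subshift (b i)"
      using sub i unfolding E_def subshift_centered_set by blast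
    moreover have "measure \<nu> (subshift (b i)) = 0" using zero[OF i] by (simp add: measure_def)
    ultimately show ?thesis by simp
  qed
  define \<epsilon> where "\<epsilon> = 1 / (2 * real s + 1)"
  have \<epsilon>0: "0 < \<epsilon>" unfolding \<epsilon>_def by simp
  have "\<forall>i\<in>{1..s}. eventually (\<lambda>L. measure \<nu> (E i L) < \<epsilon>) sequentially"
  proof
    fix i assume "i \<in> {1..s}"
    from order_tendstoD(2)[OF lim[OF this] \<epsilon>0] show "eventually (\<lambda>L. measure \<nu> (E i L) < \<epsilon>) sequentially" .
  qed
  then have "eventually (\<lambda>L. \<forall>i\<in>{1..s}. measure \<nu> (E i L) < \<epsilon>) sequentially"
    by (rule eventually_ball_finite[rotated]) simp
  then obtain L where L: "\<And>i. i \<in> {1..s} \<Longrightarrow> measure \<nu> (E i L) < \<epsilon>"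
    unfolding eventually_sequentially by blast
  define P where "P v = (\<exists>i\<in>{1..s}. v \<in> lang (b i))" for v
  define W where "W = 2 * L + 1"
  have EU: "subshift a \<inter> {x. P (win x (- int L) W)} = (\<Union>i\<in>{1..s}. E i L)"
    unfolding E_def P_def W_def by auto
  have mE: "measure \<nu> (subshift a \<inter> {x. P (win x (- int L) W)}) < 1 / 2"
  proof -
    have "measure \<nu> (\<Union>i\<in>{1..s}. E i L) \<le> (\<Sum>i\<in>{1..s}. measure \<nu> (E i L))"
      by (rule measure_UNION_le) (use Em in auto)
    also have "\<dots> \<le> (\<Sum>i\<in>{1..s}. \<epsilon>)" using L by (intro sum_mono) (auto simp: less_imp_le)
    also have "\<dots> = real s * \<epsilon>" by simp
    also have "\<dots> < 1 / 2" unfolding \<epsilon>_def by (simp add: field_simps)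
    finally show ?thesis unfolding EU .
  qed
  have m0: "measure \<nu> (subshift a \<inter> {x. P (win x 0 W)}) = measure \<nu> (subshift a \<inter> {x. P (win x (- int L) W)})"
    using invariant_win_shift[OF \<nu>, of P "- int L" L W] by (simp add: measure_def)
  obtain N where N: "0 < N" "\<And>p. N \<le> 2 * card {j. j < N \<and> (\<exists>i\<in>{1..s}. winN a (p + j) W \<in> lang (b i))}"
    using comb[of W] unfolding W_def by auto
  let ?f = "\<lambda>x. \<Sum>j<N. indicator (subshift a \<inter> {x. P (win x (int j) W)}) x :: real"
  have I: "integrable \<nu> ?f" "(\<integral>x. ?f x \<partial>\<nu>) = real N * measure \<nu> (subshift a \<inter> {x. P (win x 0 W)})"
    using integral_window_sum[OF \<nu>, of P W N] by auto
  have pw: "real N / 2 \<le> ?f x" if x: "x \<in> space \<nu>" for x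
  proof -
    have xa: "x \<in> subshift a" using x sn by simp
    obtain p where p: "\<forall>j<N. win x (int j) W = winN (\<lambda>t. a (p + t)) j W"
      using win_subshift_shift[OF xa N(1)] by blast
    have "{j. j < N \<and> P (win x (int j) W)} = {j. j < N \<and> (\<exists>i\<in>{1..s}. winN a (p + j) W \<in> lang (b i))}"
      using p unfolding P_def winN_shift_fun by auto
    then have "?f x = real (card {j. j < N \<and> (\<exists>i\<in>{1..s}. winN a (p + j) W \<in> lang (b i))})"
      using sum_indicator_win[of "subshift a" P W x N] xa by simp
    then show ?thesis using N(2)[of p] by simp
  qed
  have "(\<integral>x. real N / 2 \<partial>\<nu>) \<le> (\<integral>x. ?f x \<partial>\<nu>)"
    using I pw by (intro integral_mono_AE) (auto intro!: AE_I2)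
  then have "real N / 2 \<le> real N * measure \<nu> (subshift a \<inter> {x. P (win x (- int L) W)})"
    using I m0 by (simp add: prob_space)
  moreover have "real N * measure \<nu> (subshift a \<inter> {x. P (win x (- int L) W)}) < real N * (1 / 2)"
    using mE N(1) by simp
  ultimately show False by simp
qed

theorem propositionA5:
  fixes k s :: nat
    and a :: "nat \<Rightarrow> 'a::discrete_topology"
    and b :: "nat \<Rightarrow> nat \<Rightarrow> 'a"
    and M :: "nat \<Rightarrow> nat set"
    and \<mu> :: "nat \<Rightarrow> (int \<Rightarrow> 'a) measure"
    and \<nu> :: "(int \<Rightarrow> 'a) measure"
  assumes a_aut: "automatic k a"
    and b_pp: "\<forall>i\<in>{1..s}. \<exists>l\<ge>1. prim_prolong_automatic (k ^ l) (b i)"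
    and M_def: "\<forall>i\<in>{1..s}. M i =
        {m. \<forall>lam::nat. \<forall>r<k ^ lam. a (m * k ^ lam + r) = b i (m * k ^ lam + r)}"
    and M_disj: "\<forall>i\<in>{1..s}. \<forall>j\<in>{1..s}. i \<noteq> j \<longrightarrow> M i \<inter> M j = {}"
    and M_pos: "\<forall>i\<in>{1..s}. \<exists>d>0. has_log_density (M i) d"
    and M0: "upper_banach_density (UNIV - (\<Union>i\<in>{1..s}. M i)) = 0"
    and \<mu>_inv: "\<forall>i\<in>{1..s}. invariant_prob (subshift a) (\<mu> i)"
    and \<mu>_supp: "\<forall>i\<in>{1..s}. emeasure (\<mu> i) (subshift (b i)) = 1"
    and \<nu>_erg: "ergodic_prob (subshift a) \<nu>"
  shows "\<exists>i\<in>{1..s}. \<nu> = \<mu> i"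
proof -
  let ?X = "subshift a"
  have k2: "2 \<le> k"
    using a_aut unfolding automatic_def is_DFAO_def by auto
  have \<nu>: "invariant_prob ?X \<nu>" using \<nu>_erg unfolding ergodic_prob_def by simp
  interpret pn: prob_space \<nu> using \<nu> unfolding invariant_prob_def by simp
  have sn: "space \<nu> = ?X" using invariant_space[OF \<nu>] .
  have setsn: "sets \<nu> = sets (restrict_space borel ?X)" using \<nu> unfolding invariant_prob_def by simp
  have sub: "\<forall>i\<in>{1..s}. subshift (b i) \<subseteq> ?X"
  proof
    fix i assume i: "i \<in> {1..s}"
    have "subshift (b i) \<in> sets (\<mu> i)"
      using \<mu>_supp i emeasure_notin_sets[of "subshift (b i)" "\<mu> i"] by auto
    then have "subshift (b i) \<subseteq> space (\<mu> i)" by (rule sets.sets_into_space)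
    then show "subshift (b i) \<subseteq> ?X" using invariant_space[OF \<mu>_inv[rule_format, OF i]] by simp
  qed
  have comb: "\<And>W. 1 \<le> W \<Longrightarrow> \<exists>N>0. \<forall>p. N \<le> 2 * card {j. j < N \<and> (\<exists>i\<in>{1..s}. winN a (p + j) W \<in> lang (b i))}"
    using comb_good[OF k2 M_def M0] by blast
  obtain i where i: "i \<in> {1..s}" "emeasure \<nu> (subshift (b i)) \<noteq> 0"
    using positive_component[OF \<nu> sub comb] by blast
  let ?A = "subshift (b i)"
  have AX: "?A \<subseteq> ?X" using sub i by auto
  have Am: "?A \<in> sets \<nu>"
    using rs_subshift[of ?X "b i"] AX unfolding setsn by (simp add: Int_absorb1)
  have Ainv: "shift -` ?A \<inter> space \<nu> = ?A" unfolding sn using AX by auto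
  have A1: "emeasure \<nu> ?A = 1"
    using \<nu>_erg Am Ainv i(2) unfolding ergodic_prob_def by auto
  have \<mu>i: "invariant_prob ?X (\<mu> i)" using \<mu>_inv i by auto
  have \<mu>A: "emeasure (\<mu> i) ?A = 1" using \<mu>_supp i by auto
  interpret pm: prob_space "\<mu> i" using \<mu>i unfolding invariant_prob_def by simp
  obtain l where l: "l \<ge> 1" "prim_prolong_automatic (k ^ l) (b i)" using b_pp i(1) by blast
  have cyl0: "measure \<nu> (?X \<inter> {x. win x 0 (length w) = w}) = measure (\<mu> i) (?X \<inter> {x. win x 0 (length w) = w})" for w
  proof -
    let ?d = "measure \<nu> (?X \<inter> {x. win x 0 (length w) = w}) - measure (\<mu> i) (?X \<inter> {x. win x 0 (length w) = w})"
    have "\<bar>?d\<bar> \<le> 2 * e" if e: "0 < e" for e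
    proof -
      obtain N c where Nc: "0 < N" "\<forall>p. \<bar>real (occ (\<lambda>t. b i (p + t)) w N) / real N - c\<bar> \<le> e"
        using prim_prolong_unif[OF l(2) e, of w] by blast
      have "\<bar>measure \<nu> (?X \<inter> {x. win x 0 (length w) = w}) - c\<bar> \<le> e"
        by (rule freq_bound[OF \<nu> AX A1 Nc])
      moreover have "\<bar>measure (\<mu> i) (?X \<inter> {x. win x 0 (length w) = w}) - c\<bar> \<le> e"
        by (rule freq_bound[OF \<mu>i AX \<mu>A Nc])
      ultimately show ?thesis by linarith
    qed
    then have "?d = 0"
    proof -
      assume H: "\<And>e. 0 < e \<Longrightarrow> \<bar>?d\<bar> \<le> 2 * e"
      show "?d = 0"
      proof (rule ccontr)
        assume "?d \<noteq> 0"
        then have "0 < \<bar>?d\<bar> / 4" by simp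
        from H[OF this] show False using \<open>?d \<noteq> 0\<close> by simp
      qed
    qed
    then show ?thesis by simp
  qed
  have "\<nu> = \<mu> i"
  proof (rule invariant_eqI[OF \<nu> \<mu>i])
    fix n w
    show "emeasure \<nu> (ccyl ?X n w) = emeasure (\<mu> i) (ccyl ?X n w)"
    proof (cases "length w = 2 * n + 1")
      case False
      then have "ccyl ?X n w = {}" unfolding ccyl_def by auto
      then show ?thesis by simp
    next
      case True
      have cc: "ccyl ?X n w = ?X \<inter> {x. win x (- int n) (length w) = w}" unfolding ccyl_def True ..
      have sh: "emeasure M (?X \<inter> {x. win x (- int n + int n) (length w) = w}) = emeasure M (?X \<inter> {x. win x (- int n) (length w) = w})"
        if "invariant_prob ?X M" for M :: "(int \<Rightarrow> 'a) measure"
        by (rule invariant_win_shift[OF that])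
      have "emeasure \<nu> (ccyl ?X n w) = emeasure \<nu> (?X \<inter> {x. win x 0 (length w) = w})"
        using sh[OF \<nu>] unfolding cc by simp
      also have "\<dots> = emeasure (\<mu> i) (?X \<inter> {x. win x 0 (length w) = w})"
        using cyl0[of w] by (simp add: pn.emeasure_eq_measure pm.emeasure_eq_measure)
      also have "\<dots> = emeasure (\<mu> i) (ccyl ?X n w)"
        using sh[OF \<mu>i] unfolding cc by simp
      finally show ?thesis .
    qed
  qed
  then show ?thesis using i(1) by blast
qed

end
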